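(* For $m \geq 3$, a fan-crossing free $m$-star has at most $3m-8$ arrows, and this bound is attained only for $m=3$ (for $m \geq 4$ there are at most $3m-9$ arrows).
   Context: An $m$-star is a regular $m$-gon $P$ together with a finite set of arrows. Label the vertices of $P$ counter-clockwise $v_1,\dots,v_m$ and let $e_i = v_iv_{i+1}$ (indices modulo $m$) be its boundary edges. An arrow is a ray segment starting at a vertex $v_i$ of $P$, pointing into the interior of $P$, and ending where it exits $P$ through (the relative interior of) a boundary edge $e_j$ not incident to $v_i$; several arrows may start at the same vertex. Two elements among the boundary edges and arrows intersect if they share a point other than a common endpoint vertex; in particular an arrow intersects the edge through which it exits. An element is incident to a vertex $v$ if $v$ is one of its endpoints (an arrow is incident only to its starting vertex). The $m$-star is ($2$-)fan-crossing free if no edge or arrow intersects two elements (arrows or edges) that are incident to the same vertex. *)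

theory Defs
  imports "HOL-Analysis.Analysis"
begin

definition vtx :: "nat \<Rightarrow> complex \<Rightarrow> real \<Rightarrow> real \<Rightarrow> nat \<Rightarrow> complex" where
  "vtx m c r t k = c + of_real r * cis (t + 2 * pi * real (k mod m) / real m)"

text \<open>An arrow is represented by (i, p): it starts at vertex i and ends at the exit point p,
  which lies in the relative interior of a boundary edge e_j = v_j v_(j+1) not incident to v_i.
  (For a convex polygon the segment from v_i to such p automatically runs through the interior.)\<close>
definition is_arrow :: "nat \<Rightarrow> complex \<Rightarrow> real \<Rightarrow> real \<Rightarrow> nat \<times> complex \<Rightarrow> bool" where
  "is_arrow m c r t a \<longleftrightarrow> fst a < m \<and>
     (\<exists>j<m. j \<noteq> fst a \<and> Suc j mod m \<noteq> fst a \<and>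
        snd a \<in> open_segment (vtx m c r t j) (vtx m c r t (Suc j mod m)))"

text \<open>Elements: Inl j is the boundary edge e_j (j < m), Inr a is the arrow a.\<close>
type_synonym elem = "nat + (nat \<times> complex)"

definition elem_pts :: "nat \<Rightarrow> complex \<Rightarrow> real \<Rightarrow> real \<Rightarrow> elem \<Rightarrow> complex set" where
  "elem_pts m c r t x = (case x of
      Inl j \<Rightarrow> closed_segment (vtx m c r t j) (vtx m c r t (Suc j mod m))
    | Inr a \<Rightarrow> closed_segment (vtx m c r t (fst a)) (snd a))"

definition elem_inc :: "nat \<Rightarrow> elem \<Rightarrow> nat set" where
  "elem_inc m x = (case x of Inl j \<Rightarrow> {j, Suc j mod m} | Inr a \<Rightarrow> {fst a})"

definition intersects :: "nat \<Rightarrow> complex \<Rightarrow> real \<Rightarrow> real \<Rightarrow> elem \<Rightarrow> elem \<Rightarrow> bool" where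
  "intersects m c r t x y \<longleftrightarrow>
     (\<exists>z \<in> elem_pts m c r t x \<inter> elem_pts m c r t y.
        \<not> (\<exists>k \<in> elem_inc m x \<inter> elem_inc m y. z = vtx m c r t k))"

definition elements :: "nat \<Rightarrow> (nat \<times> complex) set \<Rightarrow> elem set" where
  "elements m A = Inl ` {..<m} \<union> Inr ` A"

definition fan_crossing_free :: "nat \<Rightarrow> complex \<Rightarrow> real \<Rightarrow> real \<Rightarrow> (nat \<times> complex) set \<Rightarrow> bool" where
  "fan_crossing_free m c r t A \<longleftrightarrow>
     \<not> (\<exists>x \<in> elements m A. \<exists>y \<in> elements m A. \<exists>z \<in> elements m A.
          y \<noteq> z \<and> x \<noteq> y \<and> x \<noteq> z \<and> elem_inc m y \<inter> elem_inc m z \<noteq> {} \<and>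
          intersects m c r t x y \<and> intersects m c r t x z)"

end

theory Submission
  imports Defs
begin


definition btw :: "real \<Rightarrow> real \<Rightarrow> real \<Rightarrow> bool" where
  "btw x y s \<longleftrightarrow> min x y < s \<and> s < max x y"

definition adjv :: "real set \<Rightarrow> real \<Rightarrow> real \<Rightarrow> bool" where
  "adjv S w q \<longleftrightarrow> (\<forall>s\<in>S. s \<noteq> w \<longrightarrow> \<not> btw w q s) \<or> (\<forall>s\<in>S. s \<noteq> w \<longrightarrow> btw w q s)"

definition samearc :: "real set \<Rightarrow> real \<Rightarrow> real \<Rightarrow> bool" where
  "samearc S p q \<longleftrightarrow> (\<forall>s\<in>S. \<not> btw p q s) \<or> (\<forall>s\<in>S. btw p q s)"

definition crs :: "real \<times> real \<Rightarrow> real \<times> real \<Rightarrow> bool" where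
  "crs a b \<longleftrightarrow> fst a \<noteq> fst b \<and> (snd a = snd b \<or> btw (fst a) (snd a) (fst b) \<noteq> btw (fst a) (snd a) (snd b))"

definition validc :: "real set \<Rightarrow> (real \<times> real) set \<Rightarrow> bool" where
  "validc S A \<longleftrightarrow> finite S \<and> finite A \<and>
     (\<forall>a\<in>A. fst a \<in> S \<and> snd a \<notin> S \<and> \<not> adjv S (fst a) (snd a)) \<and>
     (\<forall>a\<in>A. \<forall>b\<in>A. a \<noteq> b \<and> fst a = fst b \<longrightarrow> \<not> samearc S (snd a) (snd b)) \<and>
     (\<forall>x\<in>A. \<forall>y\<in>A. crs x y \<longrightarrow> \<not> adjv S (fst y) (snd x)) \<and>
     (\<forall>x\<in>A. \<forall>y\<in>A. \<forall>z\<in>A. crs x y \<and> crs x z \<and> y \<noteq> z \<and> fst y = fst z \<longrightarrow> False)"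

definition ins :: "real set \<Rightarrow> real \<times> real \<Rightarrow> nat" where
  "ins S a = card {s\<in>S. btw (fst a) (snd a) s}"
definition outs :: "real set \<Rightarrow> real \<times> real \<Rightarrow> nat" where
  "outs S a = card {s\<in>S. s \<noteq> fst a \<and> \<not> btw (fst a) (snd a) s}"
definition short :: "real set \<Rightarrow> real \<times> real \<Rightarrow> nat" where
  "short S a = min (ins S a) (outs S a)"

lemma crs_sym:
  assumes "crs a b" "fst a \<noteq> snd b" "fst b \<noteq> snd a"
  shows "crs b a"
  using assms unfolding crs_def btw_def min_def max_def
  by (cases a; cases b) (auto split: if_splits)


definition pres :: "(real \<Rightarrow> real) \<Rightarrow> real set \<Rightarrow> real \<Rightarrow> real \<Rightarrow> bool" where
  "pres f K x y \<longleftrightarrow> (\<forall>s\<in>K. s \<noteq> x \<and> s \<noteq> y \<longrightarrow> btw (f x) (f y) (f s) = btw x y s)"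
definition flp :: "(real \<Rightarrow> real) \<Rightarrow> real set \<Rightarrow> real \<Rightarrow> real \<Rightarrow> bool" where
  "flp f K x y \<longleftrightarrow> (\<forall>s\<in>K. s \<noteq> x \<and> s \<noteq> y \<longrightarrow> btw (f x) (f y) (f s) = (\<not> btw x y s))"

lemma btw_self1[simp]: "\<not> btw x y x" and btw_self2[simp]: "\<not> btw x y y" and btw_same[simp]: "\<not> btw x x s"
  by (auto simp: btw_def)

lemma btw_comm: "btw x y s = btw y x s"
  by (auto simp: btw_def)

context
  fixes f :: "real \<Rightarrow> real" and S :: "real set" and A :: "(real \<times> real) set"
  assumes V: "validc S A"
    and inj: "inj_on f (S \<union> snd ` A)"
    and PF: "\<forall>x\<in>S \<union> snd ` A. \<forall>y\<in>S \<union> snd ` A. x \<noteq> y \<longrightarrow> pres f (S \<union> snd ` A) x y \<or> flp f (S \<union> snd ` A) x y"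
begin

lemma fA: "a \<in> A \<Longrightarrow> fst a \<in> S \<and> snd a \<notin> S"
  using V by (auto simp: validc_def)

lemma adjv_tr:
  assumes w: "w \<in> S" and q: "q \<in> S \<union> snd ` A" "q \<notin> S"
  shows "adjv (f ` S) (f w) (f q) = adjv S w q"
proof -
  have wq: "w \<noteq> q" using w q by auto
  have ne: "\<And>s. s \<in> S \<Longrightarrow> (f s \<noteq> f w) = (s \<noteq> w)"
    using inj w by (auto dest: inj_onD)
  from PF w q wq have "pres f (S \<union> snd ` A) w q \<or> flp f (S \<union> snd ` A) w q" by auto
  then show ?thesis
  proof
    assume P: "pres f (S \<union> snd ` A) w q"
    have "\<And>s. s \<in> S \<Longrightarrow> s \<noteq> w \<Longrightarrow> btw (f w) (f q) (f s) = btw w q s"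
      using P q unfolding pres_def by auto
    then show ?thesis unfolding adjv_def using ne by auto
  next
    assume P: "flp f (S \<union> snd ` A) w q"
    have "\<And>s. s \<in> S \<Longrightarrow> s \<noteq> w \<Longrightarrow> btw (f w) (f q) (f s) = (\<not> btw w q s)"
      using P q unfolding flp_def by auto
    then show ?thesis unfolding adjv_def using ne by auto
  qed
qed

lemma samearc_tr:
  assumes p: "p \<in> snd ` A" and q: "q \<in> snd ` A"
  shows "samearc (f ` S) (f p) (f q) = samearc S p q"
proof (cases "p = q")
  case True then show ?thesis by (simp add: samearc_def)
next
  case False
  have pS: "p \<notin> S" "q \<notin> S" using p q fA by auto
  from PF p q False have "pres f (S \<union> snd ` A) p q \<or> flp f (S \<union> snd ` A) p q" by auto
  then show ?thesis
  proof
    assume P: "pres f (S \<union> snd ` A) p q"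
    have "\<And>s. s \<in> S \<Longrightarrow> btw (f p) (f q) (f s) = btw p q s"
      using P pS unfolding pres_def by auto
    then show ?thesis unfolding samearc_def by auto
  next
    assume P: "flp f (S \<union> snd ` A) p q"
    have "\<And>s. s \<in> S \<Longrightarrow> btw (f p) (f q) (f s) = (\<not> btw p q s)"
      using P pS unfolding flp_def by auto
    then show ?thesis unfolding samearc_def by auto
  qed
qed

lemma crs_tr:
  assumes a: "a \<in> A" and b: "b \<in> A"
  shows "crs (map_prod f f a) (map_prod f f b) = crs a b"
proof -
  obtain v p where av: "a = (v, p)" by force
  obtain w q where bw: "b = (w, q)" by force
  have K: "v \<in> S" "p \<notin> S" "w \<in> S" "q \<notin> S" "p \<in> snd ` A" "q \<in> snd ` A"
    using fA[OF a] fA[OF b] a b av bw by force+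
  have e1: "(f v = f w) = (v = w)" using inj K by (auto dest: inj_onD)
  have e2: "(f p = f q) = (p = q)" using inj K by (auto dest: inj_onD)
  have "v \<noteq> p" using K by auto
  show ?thesis
  proof (cases "v = w \<or> p = q")
    case True then show ?thesis using e1 e2 av bw by (auto simp: crs_def)
  next
    case False
    then have d: "v \<noteq> w" "p \<noteq> q" by auto
    from PF K \<open>v \<noteq> p\<close> have "pres f (S \<union> snd ` A) v p \<or> flp f (S \<union> snd ` A) v p" by auto
    then have "(btw (f v) (f p) (f w) \<noteq> btw (f v) (f p) (f q)) = (btw v p w \<noteq> btw v p q)"
    proof
      assume P: "pres f (S \<union> snd ` A) v p"
      then show ?thesis using K d unfolding pres_def by auto
    next
      assume P: "flp f (S \<union> snd ` A) v p"
      then show ?thesis using K d unfolding flp_def by auto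
    qed
    then show ?thesis using av bw d e1 e2 by (simp add: crs_def)
  qed
qed

lemma injA: "inj_on (map_prod f f) A"
proof (rule inj_onI)
  fix a b assume a: "a \<in> A" and b: "b \<in> A" and e: "map_prod f f a = map_prod f f b"
  have m: "fst a \<in> S \<union> snd ` A" "fst b \<in> S \<union> snd ` A" "snd a \<in> S \<union> snd ` A" "snd b \<in> S \<union> snd ` A"
    using a b fA[OF a] fA[OF b] by auto
  have ff: "f (fst a) = f (fst b) \<and> f (snd a) = f (snd b)" using e by (cases a; cases b) simp
  have "fst a = fst b" using inj_onD[OF inj conjunct1[OF ff] m(1) m(2)] .
  moreover have "snd a = snd b" using inj_onD[OF inj conjunct2[OF ff] m(3) m(4)] .
  ultimately
  show "a = b" by (simp add: prod_eq_iff)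
qed

lemma fst_eq: "a \<in> A \<Longrightarrow> b \<in> A \<Longrightarrow> fst (map_prod f f a) = fst (map_prod f f b) \<Longrightarrow> fst a = fst b"
proof -
  assume a: "a \<in> A" and b: "b \<in> A" and e: "fst (map_prod f f a) = fst (map_prod f f b)"
  have m: "fst a \<in> S \<union> snd ` A" "fst b \<in> S \<union> snd ` A" using fA[OF a] fA[OF b] by auto
  have "f (fst a) = f (fst b)" using e by (cases a; cases b) simp
  then show "fst a = fst b" using inj_onD[OF inj _ m(1) m(2)] by blast
qed

lemma valid_tr: "validc (f ` S) (map_prod f f ` A)"
proof -
  have fin: "finite S" "finite A" using V by (auto simp: validc_def)
  have g1: "\<forall>a\<in>map_prod f f ` A. fst a \<in> f ` S \<and> snd a \<notin> f ` S \<and> \<not> adjv (f ` S) (fst a) (snd a)"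
  proof
    fix a' assume "a' \<in> map_prod f f ` A"
    then obtain a where a: "a \<in> A" and a': "a' = map_prod f f a" by auto
    have K: "fst a \<in> S" "snd a \<notin> S" "\<not> adjv S (fst a) (snd a)" using V a by (auto simp: validc_def)
    have sA: "snd a \<in> S \<union> snd ` A" using a by auto
    have "f (snd a) \<notin> f ` S"
    proof
      assume "f (snd a) \<in> f ` S"
      then obtain s where s: "s \<in> S" "f (snd a) = f s" by auto
      then have "snd a = s" using inj_onD[OF inj s(2) sA] by auto
      then show False using s K by auto
    qed
    moreover have "\<not> adjv (f ` S) (f (fst a)) (f (snd a))" using adjv_tr[OF K(1) sA K(2)] K by simp
    ultimately show "fst a' \<in> f ` S \<and> snd a' \<notin> f ` S \<and> \<not> adjv (f ` S) (fst a') (snd a')"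
      using K a' by (cases a) auto
  qed
  have g2: "\<forall>a\<in>map_prod f f ` A. \<forall>b\<in>map_prod f f ` A. a \<noteq> b \<and> fst a = fst b \<longrightarrow> \<not> samearc (f ` S) (snd a) (snd b)"
  proof (intro ballI impI)
    fix a' b' assume am: "a' \<in> map_prod f f ` A" and bm: "b' \<in> map_prod f f ` A" and h: "a' \<noteq> b' \<and> fst a' = fst b'"
    obtain a where a: "a \<in> A" "a' = map_prod f f a" using am by auto
    obtain b where b: "b \<in> A" "b' = map_prod f f b" using bm by auto
    have "a \<noteq> b" using h a(2) b(2) by blast
    moreover have "fst a = fst b" using fst_eq[OF a(1) b(1)] h a(2) b(2) by simp
    ultimately have "\<not> samearc S (snd a) (snd b)" using V a b by (auto simp: validc_def)
    moreover have "snd a' = f (snd a)" "snd b' = f (snd b)" using a(2) b(2) by (cases a; simp; cases b; simp)+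
    ultimately show "\<not> samearc (f ` S) (snd a') (snd b')"
      using samearc_tr[of "snd a" "snd b"] a(1) b(1) by simp
  qed
  have g3: "\<forall>x\<in>map_prod f f ` A. \<forall>y\<in>map_prod f f ` A. crs x y \<longrightarrow> \<not> adjv (f ` S) (fst y) (snd x)"
  proof (intro ballI impI)
    fix x' y' assume xm: "x' \<in> map_prod f f ` A" and ym: "y' \<in> map_prod f f ` A" and h: "crs x' y'"
    obtain x where x: "x \<in> A" "x' = map_prod f f x" using xm by auto
    obtain y where y: "y \<in> A" "y' = map_prod f f y" using ym by auto
    have "crs x y" using crs_tr[OF x(1) y(1)] h x y by simp
    then have "\<not> adjv S (fst y) (snd x)" using V x y by (auto simp: validc_def)
    moreover have "fst y' = f (fst y)" "snd x' = f (snd x)" using x(2) y(2) by (cases x; simp; cases y; simp)+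
    moreover have "fst y \<in> S" "snd x \<in> S \<union> snd ` A" "snd x \<notin> S" using fA[OF x(1)] fA[OF y(1)] x(1) by auto
    ultimately show "\<not> adjv (f ` S) (fst y') (snd x')"
      using adjv_tr by simp
  qed
  have g4: "\<forall>x\<in>map_prod f f ` A. \<forall>y\<in>map_prod f f ` A. \<forall>z\<in>map_prod f f ` A. crs x y \<and> crs x z \<and> y \<noteq> z \<and> fst y = fst z \<longrightarrow> False"
  proof (intro ballI impI)
    fix x' y' z' assume xm: "x' \<in> map_prod f f ` A" and ym: "y' \<in> map_prod f f ` A" and zm: "z' \<in> map_prod f f ` A"
      and h: "crs x' y' \<and> crs x' z' \<and> y' \<noteq> z' \<and> fst y' = fst z'"
    obtain x where x: "x \<in> A" "x' = map_prod f f x" using xm by auto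
    obtain y where y: "y \<in> A" "y' = map_prod f f y" using ym by auto
    obtain z where z: "z \<in> A" "z' = map_prod f f z" using zm by auto
    have "crs x y" "crs x z" using crs_tr x y z h by auto
    moreover have "y \<noteq> z" using h y(2) z(2) by blast
    moreover have "fst y = fst z" using fst_eq[OF y(1) z(1)] h y(2) z(2) by simp
    ultimately show False using V x(1) y(1) z(1) unfolding validc_def by blast
  qed
  show ?thesis unfolding validc_def using fin g1 g2 g3 g4 by auto
qed

lemma card_tr: "card (f ` S) = card S" "card (map_prod f f ` A) = card A"
proof -
  show "card (f ` S) = card S" by (rule card_image, rule inj_on_subset[OF inj]) blast
  show "card (map_prod f f ` A) = card A" by (rule card_image[OF injA])
qed

lemma ins_tr:
  assumes b: "b \<in> A"
  shows "pres f (S \<union> snd ` A) (fst b) (snd b) \<Longrightarrow> ins (f ` S) (map_prod f f b) = ins S b \<and> outs (f ` S) (map_prod f f b) = outs S b"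
    and "flp f (S \<union> snd ` A) (fst b) (snd b) \<Longrightarrow> ins (f ` S) (map_prod f f b) = outs S b \<and> outs (f ` S) (map_prod f f b) = ins S b"
    and "short (f ` S) (map_prod f f b) = short S b"
proof -
  obtain w q where bw: "b = (w, q)" by force
  have K: "w \<in> S" "q \<notin> S" "q \<in> snd ` A" using fA[OF b] b bw by force+
  have injS: "inj_on f S" by (rule inj_on_subset[OF inj]) blast
  have ne: "\<And>s. s \<in> S \<Longrightarrow> (f s \<noteq> f w) = (s \<noteq> w)"
    using inj K by (auto dest: inj_onD)
  have i1: "ins (f ` S) (map_prod f f b) = card {s\<in>S. btw (f w) (f q) (f s)}"
  proof -
    have "{s\<in>f ` S. btw (f w) (f q) s} = f ` {s\<in>S. btw (f w) (f q) (f s)}" by auto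
    moreover have "inj_on f {s\<in>S. btw (f w) (f q) (f s)}" by (rule inj_on_subset[OF injS]) blast
    ultimately show ?thesis unfolding ins_def using bw by (simp add: card_image)
  qed
  have o1: "outs (f ` S) (map_prod f f b) = card {s\<in>S. s \<noteq> w \<and> \<not> btw (f w) (f q) (f s)}"
  proof -
    have "{s\<in>f ` S. s \<noteq> f w \<and> \<not> btw (f w) (f q) s} = f ` {s\<in>S. s \<noteq> w \<and> \<not> btw (f w) (f q) (f s)}"
      using ne by auto
    moreover have "inj_on f {s\<in>S. s \<noteq> w \<and> \<not> btw (f w) (f q) (f s)}" by (rule inj_on_subset[OF injS]) blast
    ultimately show ?thesis unfolding outs_def using bw by (simp add: card_image)
  qed
  show P1: "pres f (S \<union> snd ` A) (fst b) (snd b) \<Longrightarrow> ins (f ` S) (map_prod f f b) = ins S b \<and> outs (f ` S) (map_prod f f b) = outs S b"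
  proof -
    assume P: "pres f (S \<union> snd ` A) (fst b) (snd b)"
    have "\<And>s. s \<in> S \<Longrightarrow> btw (f w) (f q) (f s) = btw w q s"
    proof -
      fix s assume "s \<in> S"
      show "btw (f w) (f q) (f s) = btw w q s"
      proof (cases "s = w")
        case True then show ?thesis by simp
      next
        case False then show ?thesis using P \<open>s \<in> S\<close> K bw unfolding pres_def by auto
      qed
    qed
    then have "{s\<in>S. btw (f w) (f q) (f s)} = {s\<in>S. btw w q s}"
      "{s\<in>S. s \<noteq> w \<and> \<not> btw (f w) (f q) (f s)} = {s\<in>S. s \<noteq> w \<and> \<not> btw w q s}" by auto
    then show ?thesis using i1 o1 bw by (simp add: ins_def outs_def)
  qed
  show P2: "flp f (S \<union> snd ` A) (fst b) (snd b) \<Longrightarrow> ins (f ` S) (map_prod f f b) = outs S b \<and> outs (f ` S) (map_prod f f b) = ins S b"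
  proof -
    assume P: "flp f (S \<union> snd ` A) (fst b) (snd b)"
    have h: "\<And>s. s \<in> S \<Longrightarrow> s \<noteq> w \<Longrightarrow> btw (f w) (f q) (f s) = (\<not> btw w q s)"
      using P K bw unfolding flp_def by auto
    have h': "btw (f w) (f q) (f s) = (s \<noteq> w \<and> \<not> btw w q s)" if "s \<in> S" for s
    proof (cases "s = w")
      case True then show ?thesis by simp
    next
      case False then show ?thesis using h that by simp
    qed
    have "{s\<in>S. btw (f w) (f q) (f s)} = {s\<in>S. s \<noteq> w \<and> \<not> btw w q s}"
      using h' by auto
    moreover have "{s\<in>S. s \<noteq> w \<and> \<not> btw (f w) (f q) (f s)} = {s\<in>S. btw w q s}"
      using h' by auto
    ultimately show ?thesis using i1 o1 bw by (simp add: ins_def outs_def)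
  qed
  have "w \<noteq> q" using K by auto
  then have "pres f (S \<union> snd ` A) (fst b) (snd b) \<or> flp f (S \<union> snd ` A) (fst b) (snd b)"
    using PF K bw by auto
  then show "short (f ` S) (map_prod f f b) = short S b"
    using P1 P2 unfolding short_def by auto
qed

end


definition rot :: "real \<Rightarrow> real \<Rightarrow> real \<Rightarrow> real" where
  "rot c T x = (if x < c then x + T else x)"

lemma rot_inj:
  assumes hT: "\<forall>x\<in>K. \<forall>y\<in>K. y - x < T"
  shows "inj_on (rot c T) K"
proof (rule inj_onI)
  fix x y assume x: "x \<in> K" and y: "y \<in> K" and e: "rot c T x = rot c T y"
  have "y - x < T" "x - y < T" using hT x y by auto
  then show "x = y" using e by (auto simp: rot_def split: if_splits)
qed

lemma rot_pres:
  assumes hT: "\<forall>x\<in>K. \<forall>y\<in>K. y - x < T" and x: "x \<in> K" and y: "y \<in> K" and same: "(x < c) = (y < c)"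
  shows "pres (rot c T) K x y"
  unfolding pres_def
proof (intro ballI impI)
  fix s assume s: "s \<in> K" and "s \<noteq> x \<and> s \<noteq> y"
  have "y - x < T" "x - y < T" "s - x < T" "x - s < T" "s - y < T" "y - s < T"
    using hT x y s by auto
  then show "btw (rot c T x) (rot c T y) (rot c T s) = btw x y s"
    using same by (auto simp: rot_def btw_def min_def max_def split: if_splits)
qed

lemma rot_flp:
  assumes hT: "\<forall>x\<in>K. \<forall>y\<in>K. y - x < T" and x: "x \<in> K" and y: "y \<in> K" and diff: "(x < c) \<noteq> (y < c)"
  shows "flp (rot c T) K x y"
  unfolding flp_def
proof (intro ballI impI)
  fix s assume s: "s \<in> K" and ne: "s \<noteq> x \<and> s \<noteq> y"
  have "y - x < T" "x - y < T" "s - x < T" "x - s < T" "s - y < T" "y - s < T"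
    using hT x y s by auto
  then show "btw (rot c T x) (rot c T y) (rot c T s) = (\<not> btw x y s)"
    using diff ne by (auto simp: rot_def btw_def min_def max_def split: if_splits)
qed

lemma rot_PF:
  assumes hT: "\<forall>x\<in>K. \<forall>y\<in>K. y - x < T"
  shows "\<forall>x\<in>K. \<forall>y\<in>K. x \<noteq> y \<longrightarrow> pres (rot c T) K x y \<or> flp (rot c T) K x y"
  using rot_pres[OF hT] rot_flp[OF hT] by blast

lemma neg_inj: "inj_on uminus (K::real set)"
  by (auto intro: inj_onI)

lemma neg_PF: "\<forall>x\<in>K. \<forall>y\<in>K. x \<noteq> y \<longrightarrow> pres uminus K x y \<or> flp uminus K x y"
  by (auto simp: pres_def btw_def min_def max_def)

lemma neg_pres: "pres uminus K x y"
  by (auto simp: pres_def btw_def min_def max_def)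

lemma bigT:
  assumes "finite (K::real set)"
  shows "\<forall>x\<in>K. \<forall>y\<in>K. y - x < Max K - Min K + 1"
proof (intro ballI)
  fix x y assume "x \<in> K" "y \<in> K"
  then have "y \<le> Max K" "Min K \<le> x" using assms by auto
  then show "y - x < Max K - Min K + 1" by linarith
qed

lemma snd_img: "snd ` (map_prod f f ` A) = f ` (snd ` A)"
  by (force simp: image_iff)

lemma transform_all:
  assumes V: "validc S A"
    and inj: "inj_on f (S \<union> snd ` A)"
    and PF: "\<forall>x\<in>S \<union> snd ` A. \<forall>y\<in>S \<union> snd ` A. x \<noteq> y \<longrightarrow> pres f (S \<union> snd ` A) x y \<or> flp f (S \<union> snd ` A) x y"
  shows "validc (f ` S) (map_prod f f ` A)" "card (f ` S) = card S" "card (map_prod f f ` A) = card A"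
    "\<forall>b'\<in>map_prod f f ` A. \<exists>b\<in>A. short (f ` S) b' = short S b"
    "f ` S \<union> snd ` (map_prod f f ` A) = f ` (S \<union> snd ` A)"
proof -
  show "validc (f ` S) (map_prod f f ` A)" by (rule valid_tr[OF V inj PF])
  show "card (f ` S) = card S" "card (map_prod f f ` A) = card A" using card_tr[OF V inj PF] by auto
  show "\<forall>b'\<in>map_prod f f ` A. \<exists>b\<in>A. short (f ` S) b' = short S b"
    using ins_tr(3)[OF V inj PF] by (auto simp del: map_prod_simp)
  show "f ` S \<union> snd ` (map_prod f f ` A) = f ` (S \<union> snd ` A)" by (simp add: image_Un snd_img)
qed


lemma canon:
  assumes V: "validc S A" and a: "a \<in> A"
  shows "\<exists>S' A' a'. validc S' A' \<and> card S' = card S \<and> card A' = card A \<and> a' \<in> A' \<and>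
     (\<forall>x\<in>S' \<union> snd ` A'. fst a' \<le> x) \<and> ins S' a' \<le> outs S' a' \<and> ins S' a' = short S a \<and>
     (\<forall>b'\<in>A'. \<exists>b\<in>A. short S' b' = short S b)"
proof -
  obtain v p where ap: "a = (v, p)" by force
  define K where "K = S \<union> snd ` A"
  have finK: "finite K" using V by (auto simp: validc_def K_def)
  have vS: "v \<in> S" and pS: "p \<notin> S" using V a ap by (auto simp: validc_def)
  have vK: "v \<in> K" and pK: "p \<in> K" using vS a ap by (force simp: K_def)+
  define T1 where "T1 = Max K - Min K + 1"
  have hT1: "\<forall>x\<in>K. \<forall>y\<in>K. y - x < T1" unfolding T1_def by (rule bigT[OF finK])
  define f1 where "f1 = rot v T1"
  have inj1: "inj_on f1 K" unfolding f1_def by (rule rot_inj[OF hT1])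
  have PF1: "\<forall>x\<in>K. \<forall>y\<in>K. x \<noteq> y \<longrightarrow> pres f1 K x y \<or> flp f1 K x y" unfolding f1_def by (rule rot_PF[OF hT1])
  define S1 where "S1 = f1 ` S"
  define A1 where "A1 = map_prod f1 f1 ` A"
  define a1 where "a1 = map_prod f1 f1 a"
  note T1 = transform_all[OF V inj1[unfolded K_def] PF1[unfolded K_def], folded S1_def A1_def]
  have f1v: "f1 v = v" by (simp add: f1_def rot_def)
  have a1v: "a1 = (v, f1 p)" using ap f1v by (simp add: a1_def)
  have a1A: "a1 \<in> A1" using a by (simp add: a1_def A1_def)
  have K1: "S1 \<union> snd ` A1 = f1 ` K" using T1(5) by (simp add: K_def)
  have ge1: "\<forall>x\<in>S1 \<union> snd ` A1. v \<le> x"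
  proof
    fix x assume "x \<in> S1 \<union> snd ` A1"
    then obtain y where y: "y \<in> K" "x = f1 y" using K1 by auto
    have "v - y < T1" using hT1 y vK by auto
    then show "v \<le> x" using y by (auto simp: f1_def rot_def)
  qed
  have sh1: "min (ins S1 a1) (outs S1 a1) = short S a"
    using ins_tr(3)[OF V inj1[unfolded K_def] PF1[unfolded K_def] a] by (simp add: short_def S1_def a1_def)
  show ?thesis
  proof (cases "ins S1 a1 \<le> outs S1 a1")
    case True
    show ?thesis
      apply (rule exI[of _ S1], rule exI[of _ A1], rule exI[of _ a1])
      using T1 True sh1 a1A ge1 a1v by auto
  next
    case False
    have p1: "f1 p > v"
    proof -
      have "f1 p \<ge> v" using ge1 a1A a1v by force
      moreover have "f1 p \<noteq> v" using inj_onD[OF inj1 _ pK vK] f1v vS pS by auto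
      ultimately show ?thesis by auto
    qed
    define K2 where "K2 = uminus ` (S1 \<union> snd ` A1)"
    note T2 = transform_all[OF T1(1) neg_inj neg_PF]
    define S2 where "S2 = uminus ` S1"
    define A2 where "A2 = map_prod uminus uminus ` A1"
    define a2 where "a2 = map_prod uminus uminus a1"
    have a2v: "a2 = (- v, - f1 p)" by (simp add: a2_def a1v)
    have a2A: "a2 \<in> A2" using a1A by (simp add: a2_def A2_def)
    have i2: "ins S2 a2 = ins S1 a1 \<and> outs S2 a2 = outs S1 a1"
      using ins_tr(1)[OF T1(1) neg_inj neg_PF a1A neg_pres] by (simp add: S2_def a2_def)
    have K2e: "S2 \<union> snd ` A2 = K2" using T2(5) by (simp add: K2_def S2_def A2_def)
    have finK2: "finite K2" using T2(1) K2e by (auto simp: validc_def S2_def A2_def)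
    have le2: "\<forall>x\<in>K2. x \<le> - v" using ge1 by (auto simp: K2_def)
    define T3 where "T3 = Max K2 - Min K2 + 1"
    have hT3: "\<forall>x\<in>K2. \<forall>y\<in>K2. y - x < T3" unfolding T3_def by (rule bigT[OF finK2])
    define f3 where "f3 = rot (- v) T3"
    have inj3: "inj_on f3 K2" unfolding f3_def by (rule rot_inj[OF hT3])
    have PF3: "\<forall>x\<in>K2. \<forall>y\<in>K2. x \<noteq> y \<longrightarrow> pres f3 K2 x y \<or> flp f3 K2 x y" unfolding f3_def by (rule rot_PF[OF hT3])
    have V2: "validc S2 A2" using T2(1) by (simp add: S2_def A2_def)
    note T3 = transform_all[OF V2 inj3[folded K2e] PF3[folded K2e]]
    define S3 where "S3 = f3 ` S2"
    define A3 where "A3 = map_prod f3 f3 ` A2"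
    define a3 where "a3 = map_prod f3 f3 a2"
    have a3A: "a3 \<in> A3" using a2A by (simp add: a3_def A3_def)
    have vS1: "v \<in> S1" using vS f1v by (force simp: S1_def)
    have pA1: "f1 p \<in> snd ` A1" using a1A a1v by force
    have mvK: "- v \<in> K2" using vS1 by (auto simp: K2_def)
    have mpK: "- f1 p \<in> K2" using pA1 by (auto simp: K2_def)
    have fl: "flp f3 K2 (- v) (- f1 p)" unfolding f3_def
      by (rule rot_flp[OF hT3 mvK mpK]) (use p1 in auto)
    have i3: "ins S3 a3 = outs S2 a2 \<and> outs S3 a3 = ins S2 a2"
      using ins_tr(2)[OF V2 inj3[folded K2e] PF3[folded K2e] a2A] fl a2v K2e
      by (simp add: S3_def a3_def)
    have f3v: "f3 (- v) = - v" by (simp add: f3_def rot_def)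
    have a3v: "fst a3 = - v" using a2v f3v by (simp add: a3_def)
    have ge3: "\<forall>x\<in>S3 \<union> snd ` A3. fst a3 \<le> x"
    proof
      fix x assume "x \<in> S3 \<union> snd ` A3"
      then obtain y where y: "y \<in> K2" "x = f3 y" using T3(5) K2e by (auto simp: S3_def A3_def)
      have "- v - y < T3" using hT3 y mvK by auto
      then show "fst a3 \<le> x" using y a3v le2 by (auto simp: f3_def rot_def)
    qed
    have shs: "\<forall>b'\<in>A3. \<exists>b\<in>A. short S3 b' = short S b"
    proof
      fix b3 assume "b3 \<in> A3"
      then obtain b2 where b2: "b2 \<in> A2" "short S3 b3 = short S2 b2" using T3(4) by (auto simp: S3_def A3_def)
      then obtain b1 where b1: "b1 \<in> A1" "short S2 b2 = short S1 b1" using T2(4) by (auto simp: S2_def A2_def)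
      then obtain b where "b \<in> A" "short S1 b1 = short S b" using T1(4) by auto
      then show "\<exists>b\<in>A. short S3 b3 = short S b" using b1 b2 by auto
    qed
    show ?thesis
      apply (rule exI[of _ S3], rule exI[of _ A3], rule exI[of _ a3])
      using T3(1-3) T2(2,3) T1(2,3) i3 i2 False sh1 a3A ge3 shs
      by (auto simp: S3_def A3_def S2_def A2_def)
  qed
qed


lemma crs_sym_A:
  assumes V: "validc S A" and x: "x \<in> A" and y: "y \<in> A" and c: "crs x y"
  shows "crs y x"
proof -
  have "fst x \<in> S" "snd x \<notin> S" "fst y \<in> S" "snd y \<notin> S" using V x y by (auto simp: validc_def)
  then have "fst x \<noteq> snd y" "fst y \<noteq> snd x" by auto
  then show ?thesis using crs_sym[OF c] by auto
qed

lemma card_less_sub: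
  assumes "finite L" "x \<in> L" "B \<subseteq> L - {x}"
  shows "card B < card L"
proof -
  have "card B \<le> card (L - {x})" using assms by (intro card_mono) auto
  also have "\<dots> < card L" using card_Diff1_less[OF assms(1,2)] .
  finally show ?thesis .
qed

lemma step_canon:
  assumes V: "validc S A" and c4: "card S \<ge> 4" and a: "a \<in> A"
    and minv: "\<forall>x\<in>S \<union> snd ` A. fst a \<le> x"
    and mn: "\<forall>b\<in>A. ins S a \<le> short S b"
  shows "\<exists>S' A'. validc S' A' \<and> card S' = card S - 1 \<and> card A \<le> card A' + 2"
proof -
  obtain v p where ap: "a = (v, p)" by force
  have finS: "finite S" and finA: "finite A" using V by (auto simp: validc_def)
  have A1: "\<And>b. b \<in> A \<Longrightarrow> fst b \<in> S \<and> snd b \<notin> S \<and> \<not> adjv S (fst b) (snd b)"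
    using V by (auto simp: validc_def)
  have C1: "\<And>b1 b2. b1 \<in> A \<Longrightarrow> b2 \<in> A \<Longrightarrow> b1 \<noteq> b2 \<Longrightarrow> fst b1 = fst b2 \<Longrightarrow> \<not> samearc S (snd b1) (snd b2)"
    using V by (auto simp: validc_def)
  have F1: "\<And>x y. x \<in> A \<Longrightarrow> y \<in> A \<Longrightarrow> crs x y \<Longrightarrow> \<not> adjv S (fst y) (snd x)"
    using V by (auto simp: validc_def)
  have F2: "\<And>x y z. x \<in> A \<Longrightarrow> y \<in> A \<Longrightarrow> z \<in> A \<Longrightarrow> crs x y \<Longrightarrow> crs x z \<Longrightarrow> y \<noteq> z \<Longrightarrow> fst y = fst z \<Longrightarrow> False"
    using V unfolding validc_def by blast
  have vS: "v \<in> S" and pS: "p \<notin> S" and nadj: "\<not> adjv S v p" using A1[OF a] ap by auto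
  have geS: "\<And>s. s \<in> S \<Longrightarrow> v \<le> s" using minv ap by auto
  have geA: "\<And>b. b \<in> A \<Longrightarrow> v \<le> snd b" using minv ap by auto
  have gtA: "\<And>b. b \<in> A \<Longrightarrow> v < snd b"
  proof -
    fix b assume b: "b \<in> A"
    have "snd b \<noteq> v" using A1[OF b] vS by auto
    then show "v < snd b" using geA[OF b] by auto
  qed
  have vp: "v < p" using gtA[OF a] ap by simp
  have ne1: "S - {v} \<noteq> {}"
  proof
    assume "S - {v} = {}"
    then have "S \<subseteq> {v}" by auto
    then have "card S \<le> card {v}" by (intro card_mono) auto
    then show False using c4 by simp
  qed
  define u where "u = Min (S - {v})"
  have uS: "u \<in> S" "u \<noteq> v" using Min_in[OF _ ne1] finS by (auto simp: u_def)
  have ule: "\<And>s. s \<in> S \<Longrightarrow> s \<noteq> v \<Longrightarrow> u \<le> s" using finS by (auto simp: u_def)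
  have vu: "v < u" using geS[OF uS(1)] uS(2) by auto
  have ne2: "S - {v, u} \<noteq> {}"
  proof
    assume "S - {v, u} = {}"
    then have "S \<subseteq> {v, u}" by auto
    then have "card S \<le> card {v, u}" by (intro card_mono) auto
    also have "\<dots> \<le> 2" by (simp add: card_insert_le_m1)
    finally show False using c4 by simp
  qed
  define up where "up = Min (S - {v, u})"
  have upS: "up \<in> S" "up \<noteq> v" "up \<noteq> u" using Min_in[OF _ ne2] finS by (auto simp: up_def)
  have uple: "\<And>s. s \<in> S \<Longrightarrow> s \<noteq> v \<Longrightarrow> s \<noteq> u \<Longrightarrow> up \<le> s" using finS by (auto simp: up_def)
  have uup: "u < up" using ule[OF upS(1,2)] upS(3) by auto
  define L where "L = {s\<in>S. btw v p s}"
  have Lc: "L = {s\<in>S. v < s \<and> s < p}" using vp by (auto simp: L_def btw_def)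
  have insa: "ins S a = card L" by (simp add: ins_def L_def ap)
  have finL: "finite L" using finS by (simp add: L_def)
  have insb: "\<And>b. b \<in> A \<Longrightarrow> ins S a \<le> ins S b" using mn by (auto simp: short_def)
  have sh_lt: "\<And>b x. b \<in> A \<Longrightarrow> x \<in> L \<Longrightarrow> {s\<in>S. btw (fst b) (snd b) s} \<subseteq> L - {x} \<Longrightarrow> False"
  proof -
    fix b x assume b: "b \<in> A" and x: "x \<in> L" and sub: "{s\<in>S. btw (fst b) (snd b) s} \<subseteq> L - {x}"
    have "ins S b < ins S a" using card_less_sub[OF finL x sub] insa by (simp add: ins_def)
    then show False using insb[OF b] by simp
  qed
  have nadj_ex: "\<exists>s\<in>S. s \<noteq> v \<and> btw v p s" using nadj by (auto simp: adjv_def)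
  then obtain s0 where s0: "s0 \<in> S" "s0 \<noteq> v" "v < s0" "s0 < p" using vp by (auto simp: btw_def)
  have up_: "u < p" using ule[OF s0(1,2)] s0 by auto
  have uL: "u \<in> L" using uS vu up_ by (simp add: Lc)
  have adj_v_alpha: "\<And>q. v < q \<Longrightarrow> q < u \<Longrightarrow> adjv S v q"
  proof -
    fix q assume "v < q" "q < u"
    then show "adjv S v q" unfolding adjv_def btw_def using ule by fastforce
  qed
  have adj_u_alpha: "\<And>q. v < q \<Longrightarrow> q < u \<Longrightarrow> adjv S u q"
  proof -
    fix q assume h: "v < q" "q < u"
    have "\<forall>s\<in>S. s \<noteq> u \<longrightarrow> \<not> btw u q s"
    proof (intro ballI impI)
      fix s assume s: "s \<in> S" "s \<noteq> u"
      show "\<not> btw u q s"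
      proof
        assume "btw u q s"
        then have "q < s" "s < u" using h by (auto simp: btw_def)
        moreover have "s \<noteq> v" using h \<open>q < s\<close> by auto
        ultimately show False using ule[OF s(1)] by fastforce
      qed
    qed
    then show "adjv S u q" by (simp add: adjv_def)
  qed
  have Falpha: "\<And>b. b \<in> A \<Longrightarrow> v < snd b \<Longrightarrow> snd b < u \<Longrightarrow> False"
  proof -
    fix b assume b: "b \<in> A" and h: "v < snd b" "snd b < u"
    obtain w q where bw: "b = (w, q)" by force
    have wS: "w \<in> S" and qS: "q \<notin> S" and nb: "\<not> adjv S w q" using A1[OF b] bw by auto
    have hq: "v < q" "q < u" using h bw by auto
    consider "w = v" | "w = u" | "w \<noteq> v" "w \<noteq> u" "w < p" | "w \<noteq> v" "w \<noteq> u" "p < w"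
      using wS pS by fastforce
    then show False
    proof cases
      case 1 then show False using nb adj_v_alpha[OF hq] by simp
    next
      case 2 then show False using nb adj_u_alpha[OF hq] by simp
    next
      case 3
      have wL: "w \<in> L" using 3 wS geS[OF wS] by (auto simp: Lc)
      have uw: "u \<le> w" using ule[OF wS 3(1)] .
      have "{s\<in>S. btw (fst b) (snd b) s} \<subseteq> L - {w}"
        using bw hq uw 3 by (auto simp: Lc btw_def)
      then show False using sh_lt[OF b wL] by simp
    next
      case 4
      have "crs b a" using bw ap 4 hq up_ vu by (auto simp: crs_def btw_def)
      then have "\<not> adjv S v q" using F1[OF b a] ap bw by simp
      then show False using adj_v_alpha[OF hq] by simp
    qed
  qed
  define Bu where "Bu = {b\<in>A. fst b = u}"
  have Bu_crs: "\<And>b. b \<in> Bu \<Longrightarrow> crs a b"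
  proof -
    fix b assume "b \<in> Bu"
    then have b: "b \<in> A" and fb: "fst b = u" by (auto simp: Bu_def)
    obtain q where bq: "b = (u, q)" using fb by (cases b) auto
    have qS: "q \<notin> S" using A1[OF b] bq by auto
    have vq: "v < q" using gtA[OF b] bq by simp
    have "\<not> q < u" using Falpha[OF b] vq bq by auto
    moreover have "q \<noteq> u" using qS uS by auto
    ultimately have uq: "u < q" by auto
    have "\<not> q < p"
    proof
      assume qp: "q < p"
      have "{s\<in>S. btw (fst b) (snd b) s} \<subseteq> L - {u}"
        using bq uq qp vu by (auto simp: Lc btw_def)
      then show False using sh_lt[OF b uL] by simp
    qed
    then show "crs a b" using ap bq uS vu up_ by (auto simp: crs_def btw_def)
  qed
  have Bu_le1: "card Bu \<le> 1"
  proof -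
    have fin: "finite Bu" using finA by (simp add: Bu_def)
    have all: "\<forall>b1\<in>Bu. \<forall>b2\<in>Bu. b1 = b2"
    proof (intro ballI)
      fix b1 b2 assume h: "b1 \<in> Bu" "b2 \<in> Bu"
      show "b1 = b2"
      proof (rule ccontr)
        assume "b1 \<noteq> b2"
        then show False using F2[OF a _ _ Bu_crs[OF h(1)] Bu_crs[OF h(2)]] h by (auto simp: Bu_def)
      qed
    qed
    show ?thesis using card_le_Suc0_iff_eq[OF fin] all by simp
  qed
  have Bu_0: "ins S a = 1 \<Longrightarrow> Bu = {}"
  proof -
    assume i1: "ins S a = 1"
    have Lu: "L = {u}" using i1 insa uL finL by (metis card_1_singletonE singletonD)
    have "adjv S u p"
    proof -
      have "\<forall>s\<in>S. s \<noteq> u \<longrightarrow> \<not> btw u p s"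
      proof (intro ballI impI)
        fix s assume s: "s \<in> S" "s \<noteq> u"
        show "\<not> btw u p s"
        proof
          assume "btw u p s"
          then have "u < s" "s < p" using up_ by (auto simp: btw_def)
          then have "s \<in> L" using s vu by (simp add: Lc)
          then show False using Lu s by auto
        qed
      qed
      then show ?thesis by (simp add: adjv_def)
    qed
    then show "Bu = {}" using F1[OF a] Bu_crs ap by (force simp: Bu_def)
  qed
  define Bv where "Bv = {b\<in>A. fst b = v \<and> u < snd b \<and> snd b < up}"
  have Bv_ins: "\<And>b. b \<in> Bv \<Longrightarrow> ins S b = 1"
  proof -
    fix b assume "b \<in> Bv"
    then have b: "b \<in> A" "fst b = v" "u < snd b" "snd b < up" by (auto simp: Bv_def)
    have "{s\<in>S. btw (fst b) (snd b) s} = {u}"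
    proof
      show "{u} \<subseteq> {s\<in>S. btw (fst b) (snd b) s}" using b uS vu by (auto simp: btw_def)
      show "{s\<in>S. btw (fst b) (snd b) s} \<subseteq> {u}"
      proof
        fix s assume "s \<in> {s\<in>S. btw (fst b) (snd b) s}"
        then have s: "s \<in> S" "v < s" "s < snd b" using b vu by (auto simp: btw_def)
        show "s \<in> {u}"
        proof (rule ccontr)
          assume "s \<notin> {u}"
          then have "up \<le> s" using uple[OF s(1)] s by auto
          then show False using s b by auto
        qed
      qed
    qed
    then show "ins S b = 1" by (simp add: ins_def)
  qed
  have Bv_0: "ins S a \<ge> 2 \<Longrightarrow> Bv = {}"
  proof -
    assume "ins S a \<ge> 2"
    then show "Bv = {}" using Bv_ins insb by (fastforce simp: Bv_def)
  qed
  have Bv_le1: "card Bv \<le> 1"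
  proof -
    have fin: "finite Bv" using finA by (simp add: Bv_def)
    have all: "\<forall>b1\<in>Bv. \<forall>b2\<in>Bv. b1 = b2"
    proof (intro ballI)
      fix b1 b2 assume h: "b1 \<in> Bv" "b2 \<in> Bv"
      show "b1 = b2"
      proof (rule ccontr)
        assume ne: "b1 \<noteq> b2"
        have hb: "b1 \<in> A" "b2 \<in> A" "fst b1 = v" "fst b2 = v" "u < snd b1" "snd b1 < up" "u < snd b2" "snd b2 < up"
          using h by (auto simp: Bv_def)
        have "samearc S (snd b1) (snd b2)"
        proof -
          have "\<forall>s\<in>S. \<not> btw (snd b1) (snd b2) s"
          proof (intro ballI notI)
            fix s assume s: "s \<in> S" and bt: "btw (snd b1) (snd b2) s"
            then have "u < s" "s < up" using hb by (auto simp: btw_def)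
            then show False using uple[OF s] vu by fastforce
          qed
          then show ?thesis by (simp add: samearc_def)
        qed
        then show False using C1[OF hb(1,2) ne] hb by simp
      qed
    qed
    show ?thesis using card_le_Suc0_iff_eq[OF fin] all by simp
  qed
  define Cv where "Cv = {y\<in>A. fst y = v \<and> \<not> (u < snd y \<and> snd y < up) \<and> (\<exists>x\<in>A. u < snd x \<and> snd x < up \<and> crs x y)}"
  have Cv_far: "\<And>y. y \<in> Cv \<Longrightarrow> up < snd y"
  proof -
    fix y assume "y \<in> Cv"
    then have y: "y \<in> A" "fst y = v" "\<not> (u < snd y \<and> snd y < up)" by (auto simp: Cv_def)
    have "snd y \<notin> S" using A1[OF y(1)] by auto
    then have "snd y \<noteq> u" "snd y \<noteq> up" using uS upS by auto
    moreover have "\<not> snd y < u"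
    proof
      assume "snd y < u"
      then have "adjv S v (snd y)" using adj_v_alpha gtA[OF y(1)] by simp
      then show False using A1[OF y(1)] y(2) by simp
    qed
    ultimately show "up < snd y" using y(3) by auto
  qed
  have Cv_w: "\<And>x y. y \<in> Cv \<Longrightarrow> x \<in> A \<Longrightarrow> u < snd x \<Longrightarrow> snd x < up \<Longrightarrow> crs x y \<Longrightarrow> snd y < fst x"
  proof -
    fix x y assume yC: "y \<in> Cv" and x: "x \<in> A" "u < snd x" "snd x < up" "crs x y"
    have y: "y \<in> A" "fst y = v" using yC by (auto simp: Cv_def)
    have far: "up < snd y" using Cv_far[OF yC] .
    have c: "crs y x" using crs_sym_A[OF V x(1) y(1) x(4)] .
    have "fst x \<noteq> v" using c y by (auto simp: crs_def)
    moreover have "fst x \<noteq> snd y" using A1[OF x(1)] A1[OF y(1)] by auto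
    moreover have "btw v (snd y) (snd x)" using x far vu by (auto simp: btw_def)
    moreover have "snd y \<noteq> snd x" using far x by auto
    ultimately have "\<not> btw v (snd y) (fst x)" using c y by (auto simp: crs_def)
    moreover have "fst x \<in> S" using A1[OF x(1)] by simp
    ultimately show "snd y < fst x" using geS[of "fst x"] \<open>fst x \<noteq> v\<close> \<open>fst x \<noteq> snd y\<close> far uup vu
      by (auto simp: btw_def)
  qed
  have Cv_le1: "card Cv \<le> 1"
  proof -
    have fin: "finite Cv" using finA by (simp add: Cv_def)
    have key: "\<And>y1 y2. y1 \<in> Cv \<Longrightarrow> y2 \<in> Cv \<Longrightarrow> snd y1 < snd y2 \<Longrightarrow> False"
    proof -
      fix y1 y2 assume h1: "y1 \<in> Cv" and h2: "y2 \<in> Cv" and lt: "snd y1 < snd y2"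
      have y1: "y1 \<in> A" "fst y1 = v" using h1 by (auto simp: Cv_def)
      have y2: "y2 \<in> A" "fst y2 = v" using h2 by (auto simp: Cv_def)
      obtain x where x: "x \<in> A" "u < snd x" "snd x < up" "crs x y2" using h2 by (auto simp: Cv_def)
      have w: "snd y2 < fst x" using Cv_w[OF h2 x] .
      have far1: "up < snd y1" using Cv_far[OF h1] .
      have "crs y1 x"
      proof -
        have "fst x \<noteq> v" using w lt far1 uup vu by auto
        moreover have "btw v (snd y1) (snd x)" using x far1 vu by (auto simp: btw_def)
        moreover have "\<not> btw v (snd y1) (fst x)" using w lt far1 uup vu by (auto simp: btw_def)
        ultimately show ?thesis using y1 by (auto simp: crs_def)
      qed
      then have "crs x y1" using crs_sym_A[OF V y1(1) x(1)] by simp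
      moreover have "y1 \<noteq> y2" using lt by auto
      ultimately show False using F2[OF x(1) y1(1) y2(1) _ x(4)] y1 y2 by auto
    qed
    have all: "\<forall>y1\<in>Cv. \<forall>y2\<in>Cv. y1 = y2"
    proof (intro ballI)
      fix y1 y2 assume h: "y1 \<in> Cv" "y2 \<in> Cv"
      have "snd y1 = snd y2" using key[OF h(1) h(2)] key[OF h(2) h(1)] by force
      moreover have "fst y1 = fst y2" using h by (auto simp: Cv_def)
      ultimately show "y1 = y2" by (simp add: prod_eq_iff)
    qed
    show ?thesis using card_le_Suc0_iff_eq[OF fin] all by simp
  qed
  have KL1: "\<And>w q. w \<in> S \<Longrightarrow> w \<noteq> u \<Longrightarrow> q \<notin> S \<Longrightarrow> v < q \<Longrightarrow> adjv (S - {u}) w q \<Longrightarrow> \<not> adjv S w q \<Longrightarrow>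
      (w = v \<and> u < q \<and> q < up) \<or> (w = up \<and> v < q \<and> q < u)"
  proof -
    fix w q assume wS: "w \<in> S" and wu: "w \<noteq> u" and qS: "q \<notin> S" and vq: "v < q"
      and ad: "adjv (S - {u}) w q" and nad: "\<not> adjv S w q"
    have wq: "w \<noteq> q" using wS qS by auto
    from nad obtain s1 where s1: "s1 \<in> S" "s1 \<noteq> w" "btw w q s1" by (auto simp: adjv_def)
    from nad obtain s2 where s2: "s2 \<in> S" "s2 \<noteq> w" "\<not> btw w q s2" by (auto simp: adjv_def)
    from ad consider (c1) "\<forall>s\<in>S - {u}. s \<noteq> w \<longrightarrow> \<not> btw w q s" | (c2) "\<forall>s\<in>S - {u}. s \<noteq> w \<longrightarrow> btw w q s"
      by (auto simp: adjv_def)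
    then show "(w = v \<and> u < q \<and> q < up) \<or> (w = up \<and> v < q \<and> q < u)"
    proof cases
      case c1
      have s1u: "s1 = u" using c1 s1 by auto
      have bu: "btw w q u" using s1 s1u by simp
      show ?thesis
      proof (cases "w < q")
        case True
        have wu': "w < u" "u < q" using bu True by (auto simp: btw_def)
        have wv: "w = v" using ule[OF wS] wu' by fastforce
        have "q < up"
        proof (rule ccontr)
          assume "\<not> q < up"
          then have "up < q" using qS upS by (cases "up = q") auto
          then have "btw w q up" using wv vu uup by (auto simp: btw_def)
          then show False using c1 upS wv by auto
        qed
        then show ?thesis using wv wu' by auto
      next
        case False
        then have qw: "q < w" using wq by auto
        have qu: "q < u" "u < w" using bu qw by (auto simp: btw_def)
        have "w \<noteq> v" using qw vq by auto
        then have "up \<le> w" using uple[OF wS] wu by auto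
        moreover have "\<not> up < w"
        proof
          assume "up < w"
          then have "btw w q up" using qu uup by (auto simp: btw_def)
          then show False using c1 upS \<open>up < w\<close> by auto
        qed
        ultimately show ?thesis using qu vq by auto
      qed
    next
      case c2
      have s2u: "s2 = u" using c2 s2 by auto
      have wv: "w = v"
      proof (rule ccontr)
        assume "w \<noteq> v"
        then have "btw w q v" using c2 vS uS by auto
        then show False using geS[OF wS] vq by (auto simp: btw_def)
      qed
      have "btw w q up" using c2 upS wv by auto
      then have "up < q" using wv vu uup by (auto simp: btw_def)
      moreover have "\<not> btw w q u" using s2 s2u by simp
      ultimately show ?thesis using wv vu uup by (auto simp: btw_def)
    qed
  qed
  have KL2: "\<And>q1 q2. v < q1 \<Longrightarrow> v < q2 \<Longrightarrow> samearc (S - {u}) q1 q2 \<Longrightarrow> \<not> samearc S q1 q2 \<Longrightarrow>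
      (v < q1 \<and> q1 < u) \<or> (v < q2 \<and> q2 < u)"
  proof -
    fix q1 q2 assume v1: "v < q1" and v2: "v < q2" and sa: "samearc (S - {u}) q1 q2" and ns: "\<not> samearc S q1 q2"
    from ns obtain s1 where s1: "s1 \<in> S" "btw q1 q2 s1" by (auto simp: samearc_def)
    from sa consider (c1) "\<forall>s\<in>S - {u}. \<not> btw q1 q2 s" | (c2) "\<forall>s\<in>S - {u}. btw q1 q2 s"
      by (auto simp: samearc_def)
    then show "(v < q1 \<and> q1 < u) \<or> (v < q2 \<and> q2 < u)"
    proof cases
      case c1
      then have "s1 = u" using s1 by auto
      then have "btw q1 q2 u" using s1 by simp
      then show ?thesis using v1 v2 by (auto simp: btw_def min_def split: if_splits)
    next
      case c2
      then have "btw q1 q2 v" using vS uS by auto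
      then show ?thesis using v1 v2 by (auto simp: btw_def)
    qed
  qed
  define R where "R = Bu \<union> Bv \<union> Cv"
  define A' where "A' = A - R"
  define S' where "S' = S - {u}"
  have cardR: "card R \<le> 2"
  proof -
    have "card Bu + card Bv \<le> 1"
    proof (cases "ins S a = 1")
      case True then show ?thesis using Bu_0 Bv_le1 by simp
    next
      case False
      have "ins S a \<ge> 1" using insa uL finL by (metis One_nat_def Suc_leI card_gt_0_iff empty_iff)
      then have "ins S a \<ge> 2" using False by simp
      then show ?thesis using Bv_0 Bu_le1 by simp
    qed
    moreover have "card R \<le> card Bu + card Bv + card Cv"
      unfolding R_def by (meson add_mono_thms_linordered_semiring(3) card_Un_le le_trans)
    ultimately show ?thesis using Cv_le1 by simp
  qed
  have cardA: "card A \<le> card A' + 2"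
  proof -
    have "A \<subseteq> A' \<union> R" by (auto simp: A'_def)
    then have "card A \<le> card (A' \<union> R)" using finA by (intro card_mono) (auto simp: A'_def R_def Bu_def Bv_def Cv_def)
    also have "\<dots> \<le> card A' + card R" by (rule card_Un_le)
    finally show ?thesis using cardR by simp
  qed
  have A'A: "A' \<subseteq> A" by (auto simp: A'_def)
  have valid': "validc S' A'"
    unfolding validc_def
  proof (intro conjI ballI impI)
    show "finite S'" using finS by (simp add: S'_def)
    show "finite A'" using finA by (simp add: A'_def)
    fix b assume b': "b \<in> A'"
    have b: "b \<in> A" using b' A'A by auto
    have fu: "fst b \<noteq> u" using b' by (auto simp: A'_def R_def Bu_def)
    show "fst b \<in> S'" using A1[OF b] fu by (simp add: S'_def)
    show "snd b \<notin> S'" using A1[OF b] by (simp add: S'_def)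
    show "\<not> adjv S' (fst b) (snd b)"
    proof
      assume ad: "adjv S' (fst b) (snd b)"
      have "(fst b = v \<and> u < snd b \<and> snd b < up) \<or> (fst b = up \<and> v < snd b \<and> snd b < u)"
        using KL1[of "fst b" "snd b"] A1[OF b] fu gtA[OF b] ad by (simp add: S'_def)
      then show False
      proof
        assume "fst b = v \<and> u < snd b \<and> snd b < up"
        then have "b \<in> Bv" using b by (simp add: Bv_def)
        then show False using b' by (simp add: A'_def R_def)
      next
        assume "fst b = up \<and> v < snd b \<and> snd b < u"
        then show False using Falpha[OF b] by simp
      qed
    qed
  next
    fix b1 b2 assume b1': "b1 \<in> A'" and b2': "b2 \<in> A'" and h: "b1 \<noteq> b2 \<and> fst b1 = fst b2"
    have b1: "b1 \<in> A" and b2: "b2 \<in> A" using b1' b2' A'A by auto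
    have ns: "\<not> samearc S (snd b1) (snd b2)" using C1[OF b1 b2] h by simp
    show "\<not> samearc S' (snd b1) (snd b2)"
    proof
      assume "samearc S' (snd b1) (snd b2)"
      then have "(v < snd b1 \<and> snd b1 < u) \<or> (v < snd b2 \<and> snd b2 < u)"
        using KL2[OF gtA[OF b1] gtA[OF b2]] ns by (simp add: S'_def)
      then show False using Falpha[OF b1] Falpha[OF b2] by auto
    qed
  next
    fix x y assume x': "x \<in> A'" and y': "y \<in> A'" and c: "crs x y"
    have x: "x \<in> A" and y: "y \<in> A" using x' y' A'A by auto
    have fu: "fst y \<noteq> u" using y' by (auto simp: A'_def R_def Bu_def)
    have na: "\<not> adjv S (fst y) (snd x)" using F1[OF x y c] .
    show "\<not> adjv S' (fst y) (snd x)"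
    proof
      assume ad: "adjv S' (fst y) (snd x)"
      have "(fst y = v \<and> u < snd x \<and> snd x < up) \<or> (fst y = up \<and> v < snd x \<and> snd x < u)"
        using KL1[of "fst y" "snd x"] A1[OF y] A1[OF x] fu gtA[OF x] ad na by (simp add: S'_def)
      then show False
      proof
        assume h: "fst y = v \<and> u < snd x \<and> snd x < up"
        have "y \<notin> Bv" using y' by (simp add: A'_def R_def)
        then have "\<not> (u < snd y \<and> snd y < up)" using y h by (simp add: Bv_def)
        then have "y \<in> Cv" using y h x c by (auto simp: Cv_def)
        then show False using y' by (simp add: A'_def R_def)
      next
        assume "fst y = up \<and> v < snd x \<and> snd x < u"
        then show False using Falpha[OF x] by simp
      qed
    qed
  next
    fix x y z assume "x \<in> A'" "y \<in> A'" "z \<in> A'" and h: "crs x y \<and> crs x z \<and> y \<noteq> z \<and> fst y = fst z"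
    then show False using F2[of x y z] A'A by auto
  qed
  have "card S' = card S - 1" using uS finS by (simp add: S'_def)
  then show ?thesis using valid' cardA by blast
qed


lemma base_canon:
  assumes V: "validc S A" and c3: "card S = 3" and a: "a \<in> A"
    and minv: "\<forall>x\<in>S \<union> snd ` A. fst a \<le> x"
  shows "A \<subseteq> {a}"
proof
  fix b assume b: "b \<in> A"
  obtain v p where ap: "a = (v, p)" by force
  have finS: "finite S" using V by (auto simp: validc_def)
  have A1: "\<And>b. b \<in> A \<Longrightarrow> fst b \<in> S \<and> snd b \<notin> S \<and> \<not> adjv S (fst b) (snd b)"
    using V by (auto simp: validc_def)
  have C1: "\<And>b1 b2. b1 \<in> A \<Longrightarrow> b2 \<in> A \<Longrightarrow> b1 \<noteq> b2 \<Longrightarrow> fst b1 = fst b2 \<Longrightarrow> \<not> samearc S (snd b1) (snd b2)"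
    using V by (auto simp: validc_def)
  have F1: "\<And>x y. x \<in> A \<Longrightarrow> y \<in> A \<Longrightarrow> crs x y \<Longrightarrow> \<not> adjv S (fst y) (snd x)"
    using V by (auto simp: validc_def)
  have vS: "v \<in> S" and pS: "p \<notin> S" and nadj: "\<not> adjv S v p" using A1[OF a] ap by auto
  have geS: "\<And>s. s \<in> S \<Longrightarrow> v \<le> s" using minv ap by auto
  have gtA: "\<And>b. b \<in> A \<Longrightarrow> v < snd b"
  proof -
    fix b assume b: "b \<in> A"
    have "snd b \<noteq> v" using A1[OF b] vS by auto
    moreover have "v \<le> snd b" using minv ap b by auto
    ultimately show "v < snd b" by auto
  qed
  have ne1: "S - {v} \<noteq> {}"
  proof
    assume "S - {v} = {}"
    then have "S \<subseteq> {v}" by auto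
    then have "card S \<le> card {v}" by (intro card_mono) auto
    then show False using c3 by simp
  qed
  define u where "u = Min (S - {v})"
  have uS: "u \<in> S" "u \<noteq> v" using Min_in[OF _ ne1] finS by (auto simp: u_def)
  have ule: "\<And>s. s \<in> S \<Longrightarrow> s \<noteq> v \<Longrightarrow> u \<le> s" using finS by (auto simp: u_def)
  have vu: "v < u" using geS[OF uS(1)] uS(2) by auto
  have ne2: "S - {v, u} \<noteq> {}"
  proof
    assume "S - {v, u} = {}"
    then have "S \<subseteq> {v, u}" by auto
    then have "card S \<le> card {v, u}" by (intro card_mono) auto
    also have "\<dots> \<le> 2" by (simp add: card_insert_le_m1)
    finally show False using c3 by simp
  qed
  define w where "w = Min (S - {v, u})"
  have wS: "w \<in> S" "w \<noteq> v" "w \<noteq> u" using Min_in[OF _ ne2] finS by (auto simp: w_def)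
  have wle: "\<And>s. s \<in> S \<Longrightarrow> s \<noteq> v \<Longrightarrow> s \<noteq> u \<Longrightarrow> w \<le> s" using finS by (auto simp: w_def)
  have uw: "u < w" using ule[OF wS(1,2)] wS(3) by auto
  have Seq: "S = {v, u, w}"
  proof -
    have "{v, u, w} \<subseteq> S" using vS uS wS by auto
    moreover have "card {v, u, w} = 3" using vu uw by auto
    ultimately show ?thesis using c3 finS by (metis card_subset_eq)
  qed
  have posv: "\<And>q. q \<notin> S \<Longrightarrow> v < q \<Longrightarrow> \<not> adjv S v q \<Longrightarrow> u < q \<and> q < w"
  proof -
    fix q assume qS: "q \<notin> S" and vq: "v < q" and na: "\<not> adjv S v q"
    have "q \<noteq> u" "q \<noteq> w" using qS uS wS by auto
    moreover have "\<not> q < u"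
    proof
      assume "q < u"
      then have "adjv S v q" using Seq vu uw vq by (auto simp: adjv_def btw_def)
      then show False using na by simp
    qed
    moreover have "\<not> w < q"
    proof
      assume "w < q"
      then have "adjv S v q" using Seq vu uw vq by (auto simp: adjv_def btw_def)
      then show False using na by simp
    qed
    ultimately show "u < q \<and> q < w" by auto
  qed
  have pp: "u < p" "p < w" using posv[OF pS _ nadj] gtA[OF a] ap by auto
  show "b \<in> {a}"
  proof (rule ccontr)
    assume nb: "b \<notin> {a}"
    obtain x q where bq: "b = (x, q)" by force
    have xS: "x \<in> S" and qS: "q \<notin> S" and nq: "\<not> adjv S x q" using A1[OF b] bq by auto
    have vq: "v < q" using gtA[OF b] bq by simp
    have xc: "x = v \<or> x = u \<or> x = w" using xS Seq by auto
    then show False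
    proof (elim disjE)
      assume xv: "x = v"
      have qq: "u < q" "q < w" using posv[OF qS vq] nq xv by auto
      have "samearc S p q" using Seq pp qq vu by (auto simp: samearc_def btw_def)
      then show False using C1[OF a b] nb ap bq xv by auto
    next
      assume xu: "x = u"
      have "\<not> q < u"
      proof
        assume "q < u"
        then have "adjv S u q" using Seq vu uw vq by (auto simp: adjv_def btw_def)
        then show False using nq xu by simp
      qed
      moreover have "\<not> (u < q \<and> q < w)"
      proof
        assume "u < q \<and> q < w"
        then have "adjv S u q" using Seq vu uw vq by (auto simp: adjv_def btw_def)
        then show False using nq xu by simp
      qed
      moreover have "q \<noteq> u" "q \<noteq> w" using qS uS wS by auto
      ultimately have wq: "w < q" by auto
      have "crs a b" using ap bq xu vu pp wq by (auto simp: crs_def btw_def)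
      then have "\<not> adjv S u p" using F1[OF a b] bq xu ap by simp
      moreover have "adjv S u p" using Seq vu uw pp by (auto simp: adjv_def btw_def)
      ultimately show False by simp
    next
      assume xw: "x = w"
      have "\<not> (u < q \<and> q < w)"
      proof
        assume "u < q \<and> q < w"
        then have "adjv S w q" using Seq vu uw vq by (auto simp: adjv_def btw_def)
        then show False using nq xw by simp
      qed
      moreover have "\<not> w < q"
      proof
        assume "w < q"
        then have "adjv S w q" using Seq vu uw vq by (auto simp: adjv_def btw_def)
        then show False using nq xw by simp
      qed
      moreover have "q \<noteq> u" "q \<noteq> w" using qS uS wS by auto
      ultimately have qu: "q < u" by auto
      have "crs a b" using ap bq xw vu pp qu vq by (auto simp: crs_def btw_def)
      then have "\<not> adjv S w p" using F1[OF a b] bq xw ap by simp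
      moreover have "adjv S w p" using Seq vu uw pp by (auto simp: adjv_def btw_def)
      ultimately show False by simp
    qed
  qed
qed

lemma comb_bound_n:
  assumes "n \<ge> 3"
  shows "\<forall>S A. card S = n \<longrightarrow> validc S A \<longrightarrow> card A \<le> 2 * n - 5"
  using assms
proof (induction n rule: nat_induct_at_least)
  case base
  show ?case
  proof (intro allI impI)
    fix S A assume c: "card S = 3" and V: "validc S (A :: (real \<times> real) set)"
    show "card A \<le> 2 * 3 - 5"
    proof (cases "A = {}")
      case True then show ?thesis by simp
    next
      case False
      then obtain a where a: "a \<in> A" by auto
      obtain S' A' a' where V': "validc S' A'" and cs: "card S' = card S" and ca: "card A' = card A"
        and a': "a' \<in> A'" and mv: "\<forall>x\<in>S' \<union> snd ` A'. fst a' \<le> x"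
        using canon[OF V a] by blast
      have "A' \<subseteq> {a'}" using base_canon[OF V' _ a' mv] cs c by simp
      then have "card A' \<le> card {a'}" by (intro card_mono) auto
      then have "card A' \<le> 1" by simp
      then show ?thesis using ca by simp
    qed
  qed
next
  case (Suc n)
  show ?case
  proof (intro allI impI)
    fix S A assume c: "card S = Suc n" and V: "validc S (A :: (real \<times> real) set)"
    show "card A \<le> 2 * Suc n - 5"
    proof (cases "A = {}")
      case True then show ?thesis by simp
    next
      case False
      have finA: "finite A" using V by (simp add: validc_def)
      define k where "k = Min (short S ` A)"
      have "k \<in> short S ` A" unfolding k_def using finA False by (intro Min_in) auto
      then obtain a where a: "a \<in> A" and ak: "short S a = k" by auto
      have amin: "\<forall>b\<in>A. short S a \<le> short S b" using ak finA by (auto simp: k_def)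
      obtain S1 A1 a1 where V1: "validc S1 A1" and cs: "card S1 = card S" and ca: "card A1 = card A"
        and a1: "a1 \<in> A1" and mv: "\<forall>x\<in>S1 \<union> snd ` A1. fst a1 \<le> x"
        and io: "ins S1 a1 \<le> outs S1 a1" and is1: "ins S1 a1 = short S a"
        and sh: "\<forall>b'\<in>A1. \<exists>b\<in>A. short S1 b' = short S b"
        using canon[OF V a] by blast
      have mn: "\<forall>b\<in>A1. ins S1 a1 \<le> short S1 b"
      proof
        fix b1 assume "b1 \<in> A1"
        then obtain b where "b \<in> A" "short S1 b1 = short S b" using sh by blast
        then show "ins S1 a1 \<le> short S1 b1" using amin is1 by auto
      qed
      have c4: "card S1 \<ge> 4" using cs c Suc.hyps by simp
      obtain S' A' where V': "validc S' A'" and cs': "card S' = card S1 - 1" and ca': "card A1 \<le> card A' + 2"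
        using step_canon[OF V1 c4 a1 mv mn] by blast
      have "card A' \<le> 2 * n - 5" using Suc.IH V' cs' cs c by simp
      then show ?thesis using ca ca' Suc.hyps by simp
    qed
  qed
qed

theorem comb_bound:
  assumes "validc S A" "card S \<ge> 3"
  shows "card A \<le> 2 * card S - 5"
  using comb_bound_n[OF assms(2)] assms(1) by blast


definition Or :: "complex \<Rightarrow> complex \<Rightarrow> complex \<Rightarrow> real" where
  "Or P Q R = (Re Q - Re P) * (Im R - Im P) - (Im Q - Im P) * (Re R - Re P)"

definition comb :: "real \<Rightarrow> complex \<Rightarrow> complex \<Rightarrow> complex" where
  "comb l A B = of_real (1 - l) * A + of_real l * B"

lemma Or_cyc: "Or P Q R = Or Q R P"
  by (simp add: Or_def algebra_simps)

lemma Or_swap: "Or P Q R = - Or P R Q"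
  by (simp add: Or_def algebra_simps)

lemma Or_comb1: "Or (comb l A B) Q R = (1 - l) * Or A Q R + l * Or B Q R"
  by (simp add: Or_def comb_def algebra_simps)

lemma Or_comb2: "Or P (comb l A B) R = (1 - l) * Or P A R + l * Or P B R"
  by (simp add: Or_def comb_def algebra_simps)

lemma Or_comb3: "Or P Q (comb l A B) = (1 - l) * Or P Q A + l * Or P Q B"
  by (simp add: Or_def comb_def algebra_simps)

lemma Or_coll: "Or (comb l1 A B) (comb l2 A B) R = (l2 - l1) * Or A B R"
  by (simp add: Or_def comb_def algebra_simps)

lemma sin_identity:
  fixes X Y :: real
  shows "sin (2*X) + sin (2*Y) - sin (2*X + 2*Y) = 4 * sin X * sin Y * sin (X + Y)"
proof -
  have sx: "(sin X)^2 + (cos X)^2 = 1" and sy: "(sin Y)^2 + (cos Y)^2 = 1" by simp_all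
  have "sin (2*X + 2*Y) = sin (2*X) * cos (2*Y) + cos (2*X) * sin (2*Y)" by (rule sin_add)
  then show ?thesis
    apply (simp add: sin_double cos_double sin_add cos_add)
    using sx sy by algebra
qed

definition W :: "nat \<Rightarrow> complex \<Rightarrow> real \<Rightarrow> real \<Rightarrow> real \<Rightarrow> complex" where
  "W m c r t s = c + of_real r * cis (t + 2 * pi * s / real m)"

lemma W_formula:
  assumes "m > 0"
  shows "Or (W m c r t a) (W m c r t b) (W m c r t d) =
    4 * r^2 * sin (pi * (b - a) / m) * sin (pi * (d - b) / m) * sin (pi * (d - a) / m)"
proof -
  define al where "al = t + 2 * pi * a / real m"
  define be where "be = t + 2 * pi * b / real m"
  define ga where "ga = t + 2 * pi * d / real m"
  define X where "X = pi * (b - a) / m"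
  define Y where "Y = pi * (d - b) / m"
  have e1: "be - al = 2 * X" and e2: "ga - be = 2 * Y" and e3: "ga - al = 2 * X + 2 * Y"
    using assms by (simp_all add: al_def be_def ga_def X_def Y_def field_simps)
  have e4: "pi * (d - a) / m = X + Y" using assms by (simp add: X_def Y_def field_simps)
  have Wa: "W m c r t a = c + of_real r * cis al" by (simp add: W_def al_def)
  have Wb: "W m c r t b = c + of_real r * cis be" by (simp add: W_def be_def)
  have Wd: "W m c r t d = c + of_real r * cis ga" by (simp add: W_def ga_def)
  have "Or (W m c r t a) (W m c r t b) (W m c r t d) = r^2 * (sin (be - al) + sin (ga - be) - sin (ga - al))"
    unfolding Wa Wb Wd by (simp add: Or_def sin_diff power2_eq_square algebra_simps)
  also have "\<dots> = r^2 * (sin (2*X) + sin (2*Y) - sin (2*X + 2*Y))" by (simp only: e1 e2 e3)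
  also have "\<dots> = 4 * r^2 * sin X * sin Y * sin (X + Y)" by (simp add: sin_identity)
  finally show ?thesis using e4 by (simp add: X_def Y_def)
qed

lemma W_nonneg:
  fixes a b d :: real
  assumes "m > 0" "a \<le> b" "b \<le> d" "d \<le> a + m"
  shows "Or (W m c r t a) (W m c r t b) (W m c r t d) \<ge> 0"
proof -
  have h: "\<And>x::real. 0 \<le> x \<Longrightarrow> x \<le> real m \<Longrightarrow> 0 \<le> sin (pi * x / m)"
  proof -
    fix x :: real assume "0 \<le> x" "x \<le> m"
    moreover have "pi * x / m \<le> pi" using \<open>x \<le> m\<close> assms(1) by (simp add: divide_le_eq mult_left_mono)
    ultimately show "0 \<le> sin (pi * x / m)" using assms(1) by (intro sin_ge_zero) auto
  qed
  have "0 \<le> sin (pi * (b - a) / m)" by (rule h) (use assms in auto)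
  moreover have "0 \<le> sin (pi * (d - b) / m)" by (rule h) (use assms in auto)
  moreover have "0 \<le> sin (pi * (d - a) / m)" by (rule h) (use assms in auto)
  ultimately
  show ?thesis using W_formula[OF assms(1)] by simp
qed

lemma W_pos:
  fixes a b d :: real
  assumes "m > 0" "a < b" "b < d" "d < a + m" "r \<noteq> 0"
  shows "Or (W m c r t a) (W m c r t b) (W m c r t d) > 0"
proof -
  have h: "\<And>x::real. 0 < x \<Longrightarrow> x < real m \<Longrightarrow> 0 < sin (pi * x / m)"
  proof -
    fix x :: real assume "0 < x" "x < m"
    moreover have "pi * x / m < pi" using \<open>x < m\<close> assms(1) by (simp add: divide_less_eq)
    ultimately show "0 < sin (pi * x / m)" using assms(1) by (intro sin_gt_zero) auto
  qed
  have "0 < sin (pi * (b - a) / m)" by (rule h) (use assms in auto)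
  moreover have "0 < sin (pi * (d - b) / m)" by (rule h) (use assms in auto)
  moreover have "0 < sin (pi * (d - a) / m)" by (rule h) (use assms in auto)
  moreover have "r^2 > 0" using assms by simp
  ultimately show ?thesis using W_formula[OF assms(1)] by simp
qed


lemma lc1: "0 \<le> (l::real) \<Longrightarrow> l \<le> 1 \<Longrightarrow> 0 \<le> P \<Longrightarrow> 0 \<le> Q \<Longrightarrow> 0 \<le> (1 - l) * P + l * Q"
  by simp
lemma lc2: "0 \<le> (l::real) \<Longrightarrow> l < 1 \<Longrightarrow> 0 < P \<Longrightarrow> 0 \<le> Q \<Longrightarrow> 0 < (1 - l) * P + l * Q"
  by (simp add: add_pos_nonneg)
lemma lc3: "0 < (l::real) \<Longrightarrow> l \<le> 1 \<Longrightarrow> 0 \<le> P \<Longrightarrow> 0 < Q \<Longrightarrow> 0 < (1 - l) * P + l * Q"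
  by (simp add: add_nonneg_pos)

context
  fixes m :: nat and c :: complex and r t :: real
  assumes m3: "m \<ge> 3" and r0: "r > 0"
begin

abbreviation "Wv \<equiv> W m c r t"

definition Bp :: "real \<Rightarrow> complex" where
  "Bp x = comb (x - of_int \<lfloor>x\<rfloor>) (Wv (of_int \<lfloor>x\<rfloor>)) (Wv (of_int \<lfloor>x\<rfloor> + 1))"

lemma mpos: "m > 0" using m3 by simp

lemma Wnn: "(a::real) \<le> b \<Longrightarrow> b \<le> d \<Longrightarrow> d \<le> a + m \<Longrightarrow> Or (Wv a) (Wv b) (Wv d) \<ge> 0"
  using W_nonneg[OF mpos] by blast
lemma Wps: "(a::real) < b \<Longrightarrow> b < d \<Longrightarrow> d < a + m \<Longrightarrow> Or (Wv a) (Wv b) (Wv d) > 0"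
  using W_pos[OF mpos] r0 by force

definition NC :: "real \<Rightarrow> real \<Rightarrow> real \<Rightarrow> bool" where
  "NC x y w \<longleftrightarrow> (\<forall>e::int. \<not> (real_of_int e \<le> x \<and> x \<le> real_of_int e + 1 \<and> real_of_int e \<le> y \<and> y \<le> real_of_int e + 1 \<and> real_of_int e \<le> w \<and> w \<le> real_of_int e + 1)) \<and>
     \<not> (x = 0 \<and> real m - 1 \<le> y \<and> real m - 1 \<le> w)"

lemma POS:
  fixes x y w :: real
  assumes x0: "0 \<le> x" and xy: "x < y" and yw: "y < w" and wm: "w < m" and nc: "NC x y w"
  shows "Or (Bp x) (Bp y) (Bp w) > 0"
proof -
  define ix where "ix = \<lfloor>x\<rfloor>"
  define iy where "iy = \<lfloor>y\<rfloor>"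
  define iw where "iw = \<lfloor>w\<rfloor>"
  define fx where "fx = x - of_int ix"
  define fy where "fy = y - of_int iy"
  define fw where "fw = w - of_int iw"
  have fxr: "0 \<le> fx" "fx < 1" unfolding fx_def ix_def by linarith+
  have fyr: "0 \<le> fy" "fy < 1" unfolding fy_def iy_def by linarith+
  have fwr: "0 \<le> fw" "fw < 1" unfolding fw_def iw_def by linarith+
  have Bx: "Bp x = comb fx (Wv ix) (Wv (ix + 1))" by (simp add: Bp_def fx_def ix_def)
  have By: "Bp y = comb fy (Wv iy) (Wv (iy + 1))" by (simp add: Bp_def fy_def iy_def)
  have Bw: "Bp w = comb fw (Wv iw) (Wv (iw + 1))" by (simp add: Bp_def fw_def iw_def)
  have ix0: "ix \<ge> 0" using x0 by (simp add: ix_def)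
  have ixy: "ix \<le> iy" unfolding ix_def iy_def using xy by (simp add: floor_mono)
  have iyw: "iy \<le> iw" unfolding iy_def iw_def using yw by (simp add: floor_mono)
  have iwm: "iw \<le> int m - 1" unfolding iw_def using wm by linarith
  have xe: "of_int ix \<le> x" "x \<le> of_int ix + 1" "of_int iy \<le> y" "y \<le> of_int iy + 1" "of_int iw \<le> w" "w \<le> of_int iw + 1"
    unfolding ix_def iy_def iw_def by linarith+
  have mm: "(3::real) \<le> real m" using m3 by simp
  have L3nn: "Or (Wv a) (Wv b) (Bp w) \<ge> 0"
    if h: "a \<le> b" "b \<le> of_int iw" "of_int iw + 1 \<le> a + real m" for a b :: real
    unfolding Bw Or_comb3 by (rule lc1) (use fwr h in \<open>auto intro!: Wnn\<close>)
  have L3ps: "Or (Wv a) (Wv b) (Bp w) > 0"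
    if h: "a < b" "b < of_int iw" "of_int iw + 1 \<le> a + real m" for a b :: real
    unfolding Bw Or_comb3 by (rule lc2) (use fwr h in \<open>auto intro!: Wnn Wps\<close>)
  show ?thesis
  proof (cases "ix < iy")
    case xlt: True
    show ?thesis
    proof (cases "iy < iw")
      case ylt: True
      have L2nn: "Or (Wv a) (Bp y) (Bp w) \<ge> 0"
        if h: "a \<le> of_int iy" "of_int iw + 1 \<le> a + real m" for a :: real
        unfolding By Or_comb2 by (rule lc1) (use fyr h ylt in \<open>auto intro!: L3nn\<close>)
      have L2ps: "Or (Wv ix) (Bp y) (Bp w) > 0" unfolding By Or_comb2
        by (rule lc2) (use fyr ylt xlt ix0 iwm in \<open>auto intro!: L3nn L3ps\<close>)
      show ?thesis unfolding Bx Or_comb1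
        by (rule lc2) (use fxr xlt ix0 iwm L2ps in \<open>auto intro!: L2nn\<close>)
    next
      case False
      then have yeq: "iy = iw" using iyw by simp
      have fyw: "fy < fw" using yw yeq by (simp add: fy_def fw_def)
      have e: "Or (Bp x) (Bp y) (Bp w) = (fw - fy) * Or (Wv iy) (Wv (iy + 1)) (Bp x)"
        using Or_cyc[of "Bp x" "Bp y" "Bp w"] By Bw yeq Or_coll by simp
      have n1: "Or (Wv iy) (Wv (iy + 1)) (Wv ix) \<ge> 0"
        using Wnn[of ix iy "iy + 1"] Or_cyc[of "Wv ix" "Wv iy" "Wv (iy + 1)"] xlt iwm yeq ix0 by simp
      have n2: "Or (Wv iy) (Wv (iy + 1)) (Wv (ix + 1)) \<ge> 0"
        using Wnn[of "ix + 1" iy "iy + 1"] Or_cyc[of "Wv (ix + 1)" "Wv iy" "Wv (iy + 1)"] xlt iwm yeq ix0 by simp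
      have "Or (Wv iy) (Wv (iy + 1)) (Bp x) > 0"
      proof (cases "iy + 1 < ix + int m")
        case True
        have p1: "Or (Wv iy) (Wv (iy + 1)) (Wv ix) > 0"
          using Wps[of ix iy "iy + 1"] Or_cyc[of "Wv ix" "Wv iy" "Wv (iy + 1)"] xlt True by simp
        show ?thesis unfolding Bx Or_comb3 by (rule lc2) (use fxr p1 n2 in auto)
      next
        case False
        then have ix00: "ix = 0" and iym: "iy = int m - 1" using iwm yeq ix0 by auto
        have "fx \<noteq> 0"
        proof
          assume "fx = 0"
          then have "x = 0" using ix00 by (simp add: fx_def)
          moreover have "real m - 1 \<le> y" "real m - 1 \<le> w" using xe iym yeq by auto
          ultimately show False using nc by (simp add: NC_def)
        qed
        then have fxp: "fx > 0" using fxr by simp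
        have p2: "Or (Wv iy) (Wv (iy + 1)) (Wv (ix + 1)) > 0"
          using Wps[of "ix + 1" iy "iy + 1"] Or_cyc[of "Wv (ix + 1)" "Wv iy" "Wv (iy + 1)"] ix00 iym m3 by simp
        show ?thesis unfolding Bx Or_comb3 by (rule lc3) (use fxp fxr p2 n1 in auto)
      qed
      then show ?thesis using e fyw by simp
    qed
  next
    case False
    then have xeq: "ix = iy" using ixy by simp
    show ?thesis
    proof (cases "iy < iw")
      case ylt: True
      have fxy: "fx < fy" using xy xeq by (simp add: fx_def fy_def)
      have e: "Or (Bp x) (Bp y) (Bp w) = (fy - fx) * Or (Wv ix) (Wv (ix + 1)) (Bp w)"
        using Bx By xeq Or_coll by simp
      have "Or (Wv ix) (Wv (ix + 1)) (Bp w) > 0"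
      proof (cases "iw \<ge> ix + 2")
        case True
        have p1: "Or (Wv ix) (Wv (ix + 1)) (Wv iw) > 0" using Wps[of ix "ix + 1" iw] True iwm ix0 by simp
        have n2: "Or (Wv ix) (Wv (ix + 1)) (Wv (iw + 1)) \<ge> 0" using Wnn[of ix "ix + 1" "iw + 1"] True iwm ix0 by simp
        show ?thesis unfolding Bw Or_comb3 by (rule lc2) (use fwr p1 n2 in auto)
      next
        case False
        then have iw1: "iw = ix + 1" using ylt xeq by simp
        have n1: "Or (Wv ix) (Wv (ix + 1)) (Wv iw) \<ge> 0" using Wnn[of ix "ix + 1" iw] iw1 mm by simp
        have p2: "Or (Wv ix) (Wv (ix + 1)) (Wv (iw + 1)) > 0" using Wps[of ix "ix + 1" "iw + 1"] iw1 mm by simp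
        have "fw \<noteq> 0"
        proof
          assume "fw = 0"
          then have "w = of_int ix + 1" using iw1 by (simp add: fw_def)
          then show False using nc xe xeq yw xy by (auto simp: NC_def)
        qed
        then have "fw > 0" using fwr by simp
        then show ?thesis unfolding Bw Or_comb3 by (rule lc3) (use fwr p2 n1 in auto)
      qed
      then show ?thesis using e fxy by simp
    next
      case False
      then have "iy = iw" using iyw by simp
      then show ?thesis using nc xe xeq by (auto simp: NC_def)
    qed
  qed
qed

end


lemma comb_in_seg: "0 \<le> l \<Longrightarrow> l \<le> 1 \<Longrightarrow> comb l A B \<in> closed_segment A B"
  unfolding comb_def in_segment(1) by (rule exI[of _ l]) (simp add: scaleR_conv_of_real)

lemma SEG:
  assumes h1: "Or P1 P2 P3 > 0" and h2: "Or P1 P2 P4 > 0" and h3: "Or P1 P3 P4 > 0" and h4: "Or P2 P3 P4 > 0"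
  shows "closed_segment P1 P3 \<inter> closed_segment P2 P4 \<noteq> {}"
proof -
  define D where "D = Or P1 P2 P4 + Or P2 P3 P4"
  have D2: "D = Or P1 P2 P3 + Or P1 P3 P4" unfolding D_def Or_def by algebra
  have Dp: "D > 0" using h2 h4 by (simp add: D_def)
  define s where "s = Or P1 P2 P4 / D"
  define u where "u = Or P1 P2 P3 / D"
  have s01: "0 \<le> s" "s \<le> 1" using h2 h4 Dp by (simp_all add: s_def D_def divide_le_eq)
  have u01: "0 \<le> u" "u \<le> 1" using h1 h3 Dp D2 by (simp_all add: u_def divide_le_eq)
  have eq: "comb s P1 P3 = comb u P2 P4"
  proof (rule complex_eqI)
    show "Re (comb s P1 P3) = Re (comb u P2 P4)"
      using Dp unfolding comb_def s_def u_def
      apply (simp add: field_simps)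
      unfolding D_def Or_def by algebra
    show "Im (comb s P1 P3) = Im (comb u P2 P4)"
      using Dp unfolding comb_def s_def u_def
      apply (simp add: field_simps)
      unfolding D_def Or_def by algebra
  qed
  have "comb s P1 P3 \<in> closed_segment P1 P3" by (rule comb_in_seg[OF s01])
  moreover have "comb s P1 P3 \<in> closed_segment P2 P4" unfolding eq by (rule comb_in_seg[OF u01])
  ultimately show ?thesis by blast
qed


context
  fixes m :: nat and c :: complex and r t :: real
  assumes m3: "m \<ge> 3" and r0: "r > 0"
begin

abbreviation "Bq \<equiv> Bp m c r t"
abbreviation "Wq \<equiv> W m c r t"

lemma NCpair:
  fixes x y w :: real
  assumes x0: "0 \<le> x" and xy: "x < y" and yw: "y < w" and wm: "w < m"
    and ii: "ii < m" and j: "j < m" and u: "0 < u" "u < 1" and jii: "j \<noteq> ii" and sj: "Suc j mod m \<noteq> ii"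
    and iin: "real ii = x \<or> real ii = y \<or> real ii = w"
    and pin: "real j + u = x \<or> real j + u = y \<or> real j + u = w"
  shows "NC m x y w"
  unfolding NC_def[OF m3 r0]
proof (intro conjI allI notI)
  fix e :: int
  assume h: "real_of_int e \<le> x \<and> x \<le> real_of_int e + 1 \<and> real_of_int e \<le> y \<and> y \<le> real_of_int e + 1 \<and>
    real_of_int e \<le> w \<and> w \<le> real_of_int e + 1"
  have pe: "real_of_int e \<le> real j + u" "real j + u \<le> real_of_int e + 1" using h pin by auto
  have ie: "real_of_int e \<le> real ii" "real ii \<le> real_of_int e + 1" using h iin by auto
  have ej: "e = int j"
  proof (rule ccontr)
    assume "e \<noteq> int j"
    then have "e \<le> int j - 1 \<or> e \<ge> int j + 1" by auto
    then show False
    proof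
      assume "e \<le> int j - 1"
      then have "real_of_int e \<le> real j - 1" by simp
      then show False using pe u by linarith
    next
      assume "e \<ge> int j + 1"
      then have "real_of_int e \<ge> real j + 1" by simp
      then show False using pe u by linarith
    qed
  qed
  have "real j \<le> real ii" "real ii \<le> real j + 1" using ie ej by auto
  then have "j \<le> ii" "ii \<le> j + 1" by linarith+
  then have "ii = j \<or> ii = j + 1" by auto
  moreover have "ii = j + 1 \<Longrightarrow> Suc j mod m = ii" using ii by auto
  ultimately show False using jii sj by auto
next
  assume h: "x = 0 \<and> real m - 1 \<le> y \<and> real m - 1 \<le> w"
  have "real j + u \<noteq> x" using h u by auto
  then have "real j + u \<ge> real m - 1" using pin h by auto
  then have "real j > real m - 2" using u by linarith
  then have jm: "j = m - 1" using j by linarith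
  show False
  proof (cases "real ii = x")
    case True
    then have "ii = 0" using h by simp
    moreover have "Suc j mod m = 0" using jm m3 by simp
    ultimately show False using sj by simp
  next
    case False
    then have "real ii \<ge> real m - 1" using iin h by auto
    then have "ii = m - 1" using ii by linarith
    then show False using jm jii by simp
  qed
qed

lemma real_noint:
  assumes "0 < u" "u < 1"
  shows "real ii \<noteq> real j + u"
proof
  assume e: "real ii = real j + u"
  then have "real j < real ii" "real ii < real j + 1" using assms by auto
  then have "j < ii" "ii < j + 1" by linarith+
  then show False by simp
qed

lemma G2:
  assumes ii: "ii < m" and j1: "j1 < m" and u1: "0 < u1" "u1 < 1" and j1i: "j1 \<noteq> ii" and s1: "Suc j1 mod m \<noteq> ii"
    and kk: "kk < m" and j2: "j2 < m" and u2: "0 < u2" "u2 < 1" and j2k: "j2 \<noteq> kk" and s2: "Suc j2 mod m \<noteq> kk"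
    and ik: "ii \<noteq> kk"
    and PQ: "real j1 + u1 \<noteq> real j2 + u2"
    and bt: "btw (real ii) (real j1 + u1) (real kk) \<noteq> btw (real ii) (real j1 + u1) (real j2 + u2)"
  shows "closed_segment (Bq (real ii)) (Bq (real j1 + u1)) \<inter> closed_segment (Bq (real kk)) (Bq (real j2 + u2)) \<noteq> {}"
proof -
  define i where "i = real ii"
  define k where "k = real kk"
  define P where "P = real j1 + u1"
  define Q where "Q = real j2 + u2"
  have d: "i \<noteq> P" "k \<noteq> Q" "i \<noteq> Q" "k \<noteq> P" "i \<noteq> k" "P \<noteq> Q"
    using real_noint[OF u1] real_noint[OF u2] ik PQ by (auto simp: i_def k_def P_def Q_def)
  have rng: "0 \<le> i" "i < m" "0 \<le> k" "k < m" "0 \<le> P" "P < m" "0 \<le> Q" "Q < m"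
  proof -
    show "0 \<le> i" "i < m" "0 \<le> k" "k < m" using ii kk by (auto simp: i_def k_def)
    have "real j1 + 1 \<le> real m" "real j2 + 1 \<le> real m" using j1 j2 by linarith+
    then show "0 \<le> P" "P < m" "0 \<le> Q" "Q < m" using u1 u2 by (auto simp: P_def Q_def)
  qed
  have NC1: "NC m x y w" if "0 \<le> x" "x < y" "y < w" "w < m" "i = x \<or> i = y \<or> i = w" "P = x \<or> P = y \<or> P = w" for x y w :: real
    using NCpair[OF that(1-4) ii j1 u1 j1i s1] that(5,6) by (simp add: i_def P_def)
  have NC2: "NC m x y w" if "0 \<le> x" "x < y" "y < w" "w < m" "k = x \<or> k = y \<or> k = w" "Q = x \<or> Q = y \<or> Q = w" for x y w :: real
    using NCpair[OF that(1-4) kk j2 u2 j2k s2] that(5,6) by (simp add: k_def Q_def)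
  have POS': "Or (Bq x) (Bq y) (Bq w) > 0" if "0 \<le> x" "x < y" "y < w" "w < m" "NC m x y w" for x y w :: real
    using POS[OF m3 r0 that] .
  have seg1: "closed_segment (Bq i) (Bq P) = closed_segment (Bq (min i P)) (Bq (max i P))"
    by (cases "i \<le> P") (auto simp: min_def max_def closed_segment_commute)
  have seg2: "closed_segment (Bq k) (Bq Q) = closed_segment (Bq (min k Q)) (Bq (max k Q))"
    by (cases "k \<le> Q") (auto simp: min_def max_def closed_segment_commute)
  have m1: "min i P = i \<or> min i P = P" "max i P = i \<or> max i P = P" "min i P \<noteq> max i P"
    "min k Q = k \<or> min k Q = Q" "max k Q = k \<or> max k Q = Q" "min k Q \<noteq> max k Q"
    using d by (auto simp: min_def max_def)
  have m2: "{min i P, max i P} = {i, P}" "{min k Q, max k Q} = {k, Q}" by (auto simp: min_def max_def)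
  have bt': "btw i P k \<noteq> btw i P Q" using bt by (simp add: i_def k_def P_def Q_def)
  have disj: "(min i P < min k Q \<and> min k Q < max i P \<and> max i P < max k Q) \<or>
    (min k Q < min i P \<and> min i P < max k Q \<and> max k Q < max i P)"
    using bt' d unfolding btw_def min_def max_def by (smt (verit))
  consider (A) "min i P < min k Q" "min k Q < max i P" "max i P < max k Q"
    | (B) "min k Q < min i P" "min i P < max k Q" "max k Q < max i P"
    using disj by blast
  then have "closed_segment (Bq (min i P)) (Bq (max i P)) \<inter> closed_segment (Bq (min k Q)) (Bq (max k Q)) \<noteq> {}"
  proof cases
    case A
    let ?a = "min i P" and ?b = "min k Q" and ?c = "max i P" and ?d = "max k Q"
    have r: "0 \<le> ?a" "?d < m" using rng by auto
    have "Or (Bq ?a) (Bq ?b) (Bq ?c) > 0" using A r m1 by (intro POS' NC1) (auto | linarith)+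
    moreover have "Or (Bq ?a) (Bq ?b) (Bq ?d) > 0" using A r m1 by (intro POS' NC2) (auto | linarith)+
    moreover have "Or (Bq ?a) (Bq ?c) (Bq ?d) > 0" using A r m1 by (intro POS' NC1) (auto | linarith)+
    moreover have "Or (Bq ?b) (Bq ?c) (Bq ?d) > 0" using A r m1 rng by (intro POS' NC2) (auto | linarith)+
    ultimately show ?thesis by (rule SEG)
  next
    case B
    let ?a = "min k Q" and ?b = "min i P" and ?c = "max k Q" and ?d = "max i P"
    have r: "0 \<le> ?a" "?d < m" using rng by auto
    have "Or (Bq ?a) (Bq ?b) (Bq ?c) > 0" using B r m1 by (intro POS' NC2) (auto | linarith)+
    moreover have "Or (Bq ?a) (Bq ?b) (Bq ?d) > 0" using B r m1 by (intro POS' NC1) (auto | linarith)+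
    moreover have "Or (Bq ?a) (Bq ?c) (Bq ?d) > 0" using B r m1 by (intro POS' NC2) (auto | linarith)+
    moreover have "Or (Bq ?b) (Bq ?c) (Bq ?d) > 0" using B r m1 rng by (intro POS' NC1) (auto | linarith)+
    ultimately have "closed_segment (Bq ?a) (Bq ?c) \<inter> closed_segment (Bq ?b) (Bq ?d) \<noteq> {}" by (rule SEG)
    then show ?thesis by blast
  qed
  then have "closed_segment (Bq i) (Bq P) \<inter> closed_segment (Bq k) (Bq Q) \<noteq> {}" using seg1 seg2 by metis
  then show ?thesis by (simp add: i_def k_def P_def Q_def)
qed

end


lemma adj_imp:
  assumes k: "k < m" and j: "j < m" and u: "0 < u" "u < 1"
    and ad: "adjv (real ` {..<m}) (real k) (real j + u)"
  shows "k = j \<or> k = Suc j mod m"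
proof (rule ccontr)
  assume ne: "\<not> (k = j \<or> k = Suc j mod m)"
  define S where "S = real ` {..<m}"
  define q where "q = real j + u"
  have e1: "\<exists>s\<in>S. s \<noteq> real k \<and> btw (real k) q s"
  proof (cases "k < j")
    case True
    then show ?thesis using j u by (intro bexI[of _ "real j"]) (auto simp: S_def q_def btw_def)
  next
    case False
    then have kj: "j < k" using ne by auto
    have sj: "Suc j < m"
    proof (rule ccontr)
      assume "\<not> Suc j < m"
      then have "Suc j = m" using j by auto
      then show False using kj k by auto
    qed
    then have "k \<noteq> Suc j" using ne by auto
    then have "Suc j < k" using kj by auto
    show ?thesis
    proof (rule bexI[of _ "real (Suc j)"])
      show "real (Suc j) \<in> S" unfolding S_def using sj by (intro imageI) simp
      show "real (Suc j) \<noteq> real k \<and> btw (real k) q (real (Suc j))"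
        using \<open>Suc j < k\<close> u by (auto simp: q_def btw_def)
    qed
  qed
  have e2: "\<exists>s\<in>S. s \<noteq> real k \<and> \<not> btw (real k) q s"
  proof (cases "k < j")
    case True
    show ?thesis
    proof (cases "Suc j < m")
      case True
      show ?thesis
      proof (rule bexI[of _ "real (Suc j)"])
        show "real (Suc j) \<in> S" unfolding S_def using True by (intro imageI) simp
        show "real (Suc j) \<noteq> real k \<and> \<not> btw (real k) q (real (Suc j))"
          using \<open>k < j\<close> u by (auto simp: q_def btw_def)
      qed
    next
      case False
      then have "Suc j = m" using j by auto
      then have "k \<noteq> 0" using ne by auto
      then show ?thesis using u k by (intro bexI[of _ 0]) (auto simp: S_def q_def btw_def intro!: image_eqI[of _ _ 0])
    qed
  next
    case False
    then have kj: "j < k" using ne by auto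
    then show ?thesis using j u by (intro bexI[of _ "real j"]) (auto simp: S_def q_def btw_def)
  qed
  show False using ad e1 e2 by (auto simp: adjv_def S_def q_def)
qed

lemma samearc_imp:
  assumes j1: "j1 < m" and j2: "j2 < m" and u1: "0 < u1" "u1 < 1" and u2: "0 < u2" "u2 < 1"
    and sa: "samearc (real ` {..<m}) (real j1 + u1) (real j2 + u2)"
  shows "j1 = j2"
proof (rule ccontr)
  assume "j1 \<noteq> j2"
  then consider "j1 < j2" | "j2 < j1" by linarith
  then show False
  proof cases
    case 1
    have a: "\<exists>s\<in>real ` {..<m}. btw (real j1 + u1) (real j2 + u2) s"
      using 1 j2 u1 u2 by (intro bexI[of _ "real j2"]) (auto simp: btw_def)
    have b: "\<exists>s\<in>real ` {..<m}. \<not> btw (real j1 + u1) (real j2 + u2) s"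
      using j1 u1 u2 by (intro bexI[of _ 0]) (auto simp: btw_def intro!: image_eqI[of _ _ 0])
    show False using sa a b by (auto simp: samearc_def)
  next
    case 2
    have a: "\<exists>s\<in>real ` {..<m}. btw (real j1 + u1) (real j2 + u2) s"
      using 2 j1 u1 u2 by (intro bexI[of _ "real j1"]) (auto simp: btw_def)
    have b: "\<exists>s\<in>real ` {..<m}. \<not> btw (real j1 + u1) (real j2 + u2) s"
      using j1 u1 u2 by (intro bexI[of _ 0]) (auto simp: btw_def intro!: image_eqI[of _ _ 0])
    show False using sa a b by (auto simp: samearc_def)
  qed
qed

definition apar :: "nat \<Rightarrow> complex \<Rightarrow> real \<Rightarrow> real \<Rightarrow> nat \<times> complex \<Rightarrow> nat \<times> real" where
  "apar m c r t a = (SOME ju. fst ju < m \<and> fst ju \<noteq> fst a \<and> Suc (fst ju) mod m \<noteq> fst a \<and> 0 < snd ju \<and> snd ju < 1 \<and>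
     snd a = comb (snd ju) (vtx m c r t (fst ju)) (vtx m c r t (Suc (fst ju) mod m)))"

lemma apar_prop:
  assumes "is_arrow m c r t a"
  shows "fst (apar m c r t a) < m \<and> fst (apar m c r t a) \<noteq> fst a \<and> Suc (fst (apar m c r t a)) mod m \<noteq> fst a \<and>
    0 < snd (apar m c r t a) \<and> snd (apar m c r t a) < 1 \<and>
    snd a = comb (snd (apar m c r t a)) (vtx m c r t (fst (apar m c r t a))) (vtx m c r t (Suc (fst (apar m c r t a)) mod m))"
proof -
  obtain j where j: "j < m" "j \<noteq> fst a" "Suc j mod m \<noteq> fst a"
    and os: "snd a \<in> open_segment (vtx m c r t j) (vtx m c r t (Suc j mod m))"
    using assms by (auto simp: is_arrow_def)
  obtain u where u: "0 < u" "u < 1" and e: "snd a = (1 - u) *\<^sub>R vtx m c r t j + u *\<^sub>R vtx m c r t (Suc j mod m)"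
    using os by (auto simp: in_segment(2))
  have e': "snd a = comb u (vtx m c r t j) (vtx m c r t (Suc j mod m))"
    using e by (simp add: comb_def scaleR_conv_of_real)
  have "\<exists>ju. fst ju < m \<and> fst ju \<noteq> fst a \<and> Suc (fst ju) mod m \<noteq> fst a \<and> 0 < snd ju \<and> snd ju < 1 \<and>
     snd a = comb (snd ju) (vtx m c r t (fst ju)) (vtx m c r t (Suc (fst ju) mod m))"
    using j u e' by (intro exI[of _ "(j, u)"]) simp
  then show ?thesis unfolding apar_def by (rule someI_ex)
qed

definition ppos :: "nat \<Rightarrow> complex \<Rightarrow> real \<Rightarrow> real \<Rightarrow> nat \<times> complex \<Rightarrow> real" where
  "ppos m c r t a = real (fst (apar m c r t a)) + snd (apar m c r t a)"

definition gmap :: "nat \<Rightarrow> complex \<Rightarrow> real \<Rightarrow> real \<Rightarrow> nat \<times> complex \<Rightarrow> real \<times> real" where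
  "gmap m c r t a = (real (fst a), ppos m c r t a)"

lemma intersects_sym: "intersects m c r t x y = intersects m c r t y x"
  unfolding intersects_def by (auto simp: Int_commute)

lemma fcf_contra:
  assumes "fan_crossing_free m c r t A" "x \<in> elements m A" "y \<in> elements m A" "z \<in> elements m A"
    "y \<noteq> z" "x \<noteq> y" "x \<noteq> z" "elem_inc m y \<inter> elem_inc m z \<noteq> {}"
    "intersects m c r t x y" "intersects m c r t x z"
  shows False
  using assms unfolding fan_crossing_free_def by blast

context
  fixes m :: nat and c :: complex and r t :: real
  assumes m3: "m \<ge> 3" and r0: "r > 0"
begin

lemma W_per: "Wq m c r t (real m) = Wq m c r t 0"
proof -
  have "t + 2 * pi * real m / real m = t + 2 * pi" using m3 by simp
  then show ?thesis by (simp add: W_def complex_eq_iff)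
qed

lemma vtx_W: "k < m \<Longrightarrow> vtx m c r t k = Wq m c r t (real k)"
  by (simp add: vtx_def W_def)

lemma vtx_suc: "j < m \<Longrightarrow> vtx m c r t (Suc j mod m) = Wq m c r t (real j + 1)"
proof -
  assume j: "j < m"
  show ?thesis
  proof (cases "Suc j < m")
    case True
    have "real (Suc j) = real j + 1" by simp
    then show ?thesis using vtx_W[OF True] True by (metis mod_less)
  next
    case False
    then have "Suc j = m" using j by auto
    then have "real j + 1 = real m" by simp
    moreover have "vtx m c r t (Suc j mod m) = Wq m c r t 0" using \<open>Suc j = m\<close> m3 by (simp add: vtx_def W_def)
    ultimately show ?thesis using W_per by simp
  qed
qed

lemma Bq_int: "Bq m c r t (real i) = Wq m c r t (real i)"
  by (simp add: Bp_def[OF m3 r0] comb_def)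

lemma Bq_edge: "0 \<le> u \<Longrightarrow> u < 1 \<Longrightarrow> Bq m c r t (real j + u) = comb u (Wq m c r t (real j)) (Wq m c r t (real j + 1))"
proof -
  assume u: "0 \<le> u" "u < 1"
  have "\<lfloor>real j + u\<rfloor> = int j" using u by (simp add: floor_eq_iff)
  then show ?thesis by (simp add: Bp_def[OF m3 r0])
qed

context
  fixes A :: "(nat \<times> complex) set"
  assumes finA: "finite A" and arr: "\<forall>a\<in>A. is_arrow m c r t a" and fcf: "fan_crossing_free m c r t A"
begin

lemma ainfo:
  assumes a: "a \<in> A"
  shows "fst a < m" "fst (apar m c r t a) < m" "fst (apar m c r t a) \<noteq> fst a"
    "Suc (fst (apar m c r t a)) mod m \<noteq> fst a" "0 < snd (apar m c r t a)" "snd (apar m c r t a) < 1"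
    "snd a = Bq m c r t (ppos m c r t a)" "vtx m c r t (fst a) = Bq m c r t (real (fst a))"
    "snd a = comb (snd (apar m c r t a)) (vtx m c r t (fst (apar m c r t a))) (vtx m c r t (Suc (fst (apar m c r t a)) mod m))"
proof -
  have ia: "is_arrow m c r t a" using arr a by auto
  note P = apar_prop[OF ia]
  show "fst a < m" using ia by (simp add: is_arrow_def)
  show "fst (apar m c r t a) < m" "fst (apar m c r t a) \<noteq> fst a"
    "Suc (fst (apar m c r t a)) mod m \<noteq> fst a" "0 < snd (apar m c r t a)" "snd (apar m c r t a) < 1"
    "snd a = comb (snd (apar m c r t a)) (vtx m c r t (fst (apar m c r t a))) (vtx m c r t (Suc (fst (apar m c r t a)) mod m))"
    using P by auto
  show "snd a = Bq m c r t (ppos m c r t a)"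
    using P Bq_edge[of "snd (apar m c r t a)" "fst (apar m c r t a)"] vtx_W vtx_suc by (simp add: ppos_def)
  show "vtx m c r t (fst a) = Bq m c r t (real (fst a))"
    using Bq_int vtx_W \<open>fst a < m\<close> by simp
qed

lemma inter_edge:
  assumes a: "a \<in> A"
  shows "intersects m c r t (Inr a) (Inl (fst (apar m c r t a)))"
proof -
  note I = ainfo[OF a]
  define j where "j = fst (apar m c r t a)"
  have "snd a \<in> closed_segment (vtx m c r t j) (vtx m c r t (Suc j mod m))"
    using I(9) comb_in_seg[of "snd (apar m c r t a)"] I(5,6) by (simp add: j_def)
  moreover have "snd a \<in> closed_segment (vtx m c r t (fst a)) (snd a)" by simp
  moreover have "elem_inc m (Inr a) \<inter> elem_inc m (Inl j) = {}"
    using I(3,4) by (auto simp: elem_inc_def j_def)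
  ultimately show ?thesis unfolding intersects_def elem_pts_def j_def[symmetric] by auto
qed

lemma inter_arrows:
  assumes a: "a \<in> A" and b: "b \<in> A" and cr: "crs (gmap m c r t a) (gmap m c r t b)"
  shows "intersects m c r t (Inr a) (Inr b)"
proof -
  note Ia = ainfo[OF a] and Ib = ainfo[OF b]
  have ne: "fst a \<noteq> fst b" using cr by (simp add: crs_def gmap_def)
  have inc: "elem_inc m (Inr a) \<inter> elem_inc m (Inr b) = {}" using ne by (auto simp: elem_inc_def)
  have "closed_segment (vtx m c r t (fst a)) (snd a) \<inter> closed_segment (vtx m c r t (fst b)) (snd b) \<noteq> {}"
  proof (cases "ppos m c r t a = ppos m c r t b")
    case True
    then have "snd a = snd b" using Ia(7) Ib(7) by simp
    then show ?thesis by auto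
  next
    case False
    have bt: "btw (real (fst a)) (ppos m c r t a) (real (fst b)) \<noteq> btw (real (fst a)) (ppos m c r t a) (ppos m c r t b)"
      using cr False by (simp add: crs_def gmap_def)
    have "closed_segment (Bq m c r t (real (fst a))) (Bq m c r t (real (fst (apar m c r t a)) + snd (apar m c r t a))) \<inter>
          closed_segment (Bq m c r t (real (fst b))) (Bq m c r t (real (fst (apar m c r t b)) + snd (apar m c r t b))) \<noteq> {}"
      using G2[OF m3 r0 Ia(1,2,5,6,3,4) Ib(1,2,5,6,3,4) ne] False bt by (simp add: ppos_def)
    then show ?thesis using Ia(7,8) Ib(7,8) by (simp add: ppos_def)
  qed
  then show ?thesis using inc unfolding intersects_def elem_pts_def by auto
qed

lemma gmap_inj: "inj_on (gmap m c r t) A"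
proof (rule inj_onI)
  fix a b assume a: "a \<in> A" and b: "b \<in> A" and e: "gmap m c r t a = gmap m c r t b"
  have "fst a = fst b" using e by (simp add: gmap_def)
  moreover have "ppos m c r t a = ppos m c r t b" using e by (simp add: gmap_def)
  then have "snd a = snd b" using ainfo(7)[OF a] ainfo(7)[OF b] by simp
  ultimately show "a = b" by (simp add: prod_eq_iff)
qed

lemma elA: "a \<in> A \<Longrightarrow> Inr a \<in> elements m A" by (simp add: elements_def)
lemma elE: "j < m \<Longrightarrow> Inl j \<in> elements m A" by (simp add: elements_def)

lemma valid_link: "validc (real ` {..<m}) (gmap m c r t ` A)"
  unfolding validc_def
proof (intro conjI ballI impI)
  show "finite (real ` {..<m})" by simp
  show "finite (gmap m c r t ` A)" using finA by simp
next
  fix x' assume "x' \<in> gmap m c r t ` A"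
  then obtain a where a: "a \<in> A" and x': "x' = gmap m c r t a" by auto
  note I = ainfo[OF a]
  show "fst x' \<in> real ` {..<m}" using I(1) x' by (simp add: gmap_def)
  show "snd x' \<notin> real ` {..<m}"
  proof
    assume "snd x' \<in> real ` {..<m}"
    then obtain k where "snd x' = real k" by auto
    then show False using real_noint[OF m3 r0 I(5,6), of k "fst (apar m c r t a)"] x' by (simp add: gmap_def ppos_def)
  qed
  show "\<not> adjv (real ` {..<m}) (fst x') (snd x')"
    using adj_imp[OF I(1,2,5,6)] I(3,4) x' by (auto simp: gmap_def ppos_def)
next
  fix x' y' assume xm: "x' \<in> gmap m c r t ` A" and ym: "y' \<in> gmap m c r t ` A" and h: "x' \<noteq> y' \<and> fst x' = fst y'"
  obtain a where a: "a \<in> A" and x': "x' = gmap m c r t a" using xm by auto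
  obtain b where b: "b \<in> A" and y': "y' = gmap m c r t b" using ym by auto
  note Ia = ainfo[OF a] and Ib = ainfo[OF b]
  have fe: "fst a = fst b" using h x' y' by (simp add: gmap_def)
  have ab: "a \<noteq> b" using h x' y' by auto
  show "\<not> samearc (real ` {..<m}) (snd x') (snd y')"
  proof
    assume "samearc (real ` {..<m}) (snd x') (snd y')"
    then have jj: "fst (apar m c r t a) = fst (apar m c r t b)"
      using samearc_imp[OF Ia(2) Ib(2) Ia(5,6) Ib(5,6)] x' y' by (simp add: gmap_def ppos_def)
    show False
      apply (rule fcf_contra[OF fcf elE[OF Ia(2)] elA[OF a] elA[OF b]])
      using ab fe inter_edge[OF a] inter_edge[OF b] jj intersects_sym
      by (auto simp: elem_inc_def)
  qed
next
  fix x' y' assume xm: "x' \<in> gmap m c r t ` A" and ym: "y' \<in> gmap m c r t ` A" and cr: "crs x' y'"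
  obtain a where a: "a \<in> A" and x': "x' = gmap m c r t a" using xm by auto
  obtain b where b: "b \<in> A" and y': "y' = gmap m c r t b" using ym by auto
  note Ia = ainfo[OF a] and Ib = ainfo[OF b]
  have ne: "fst a \<noteq> fst b" using cr x' y' by (simp add: crs_def gmap_def)
  show "\<not> adjv (real ` {..<m}) (fst y') (snd x')"
  proof
    assume "adjv (real ` {..<m}) (fst y') (snd x')"
    then have kk: "fst b = fst (apar m c r t a) \<or> fst b = Suc (fst (apar m c r t a)) mod m"
      using adj_imp[OF Ib(1) Ia(2) Ia(5,6)] x' y' by (simp add: gmap_def ppos_def)
    show False
      apply (rule fcf_contra[OF fcf elA[OF a] elA[OF b] elE[OF Ia(2)]])
      using ne kk inter_edge[OF a] inter_arrows[OF a b] cr x' y'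
      by (auto simp: elem_inc_def)
  qed
next
  fix x' y' z' assume xm: "x' \<in> gmap m c r t ` A" and ym: "y' \<in> gmap m c r t ` A" and zm: "z' \<in> gmap m c r t ` A"
    and h: "crs x' y' \<and> crs x' z' \<and> y' \<noteq> z' \<and> fst y' = fst z'"
  obtain a where a: "a \<in> A" and x': "x' = gmap m c r t a" using xm by auto
  obtain b where b: "b \<in> A" and y': "y' = gmap m c r t b" using ym by auto
  obtain d where d: "d \<in> A" and z': "z' = gmap m c r t d" using zm by auto
  have ne1: "fst a \<noteq> fst b" "fst a \<noteq> fst d" using h x' y' z' by (auto simp: crs_def gmap_def)
  have fe: "fst b = fst d" using h y' z' by (simp add: gmap_def)
  have bd: "b \<noteq> d" using h y' z' by auto
  show False
    apply (rule fcf_contra[OF fcf elA[OF a] elA[OF b] elA[OF d]])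
    using ne1 fe bd inter_arrows[OF a b] inter_arrows[OF a d] h x' y' z'
    by (auto simp: elem_inc_def)
qed

lemma card_bound: "card A \<le> 2 * m - 5"
proof -
  have "card (gmap m c r t ` A) \<le> 2 * card (real ` {..<m}) - 5"
    using comb_bound[OF valid_link] m3 by (simp add: card_image)
  moreover have "card (real ` {..<m}) = m" by (simp add: card_image)
  moreover have "card (gmap m c r t ` A) = card A" using gmap_inj by (rule card_image)
  ultimately show ?thesis by simp
qed

end

end

theorem lemma3:
  fixes m :: nat and c :: complex and r t :: real and A :: "(nat \<times> complex) set"
  assumes "m \<ge> 3" and "r > 0"
    and "finite A" and "\<forall>a\<in>A. is_arrow m c r t a"
    and "fan_crossing_free m c r t A"
  shows "card A \<le> 3 * m - 8 \<and> (m \<ge> 4 \<longrightarrow> card A \<le> 3 * m - 9)"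
proof -
  have "card A \<le> 2 * m - 5" using card_bound[OF assms] .
  then show ?thesis using assms(1) by auto
qed


end
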